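(* Let $\varphi$ be a consistent family of foliage grafts for a nonincreasing foliage tree $\mathbf F$, and let $\mathbf H=\mathrm{fhybr}(\mathbf F,\varphi)$. Then: (a) $\mathbf H$ is nonincreasing; (b) if $\mathbf F$ and each $\mathbf G\in\varphi$ are splittable, then $\mathbf H$ is splittable; (c) if $\mathbf F$ and each $\mathbf G\in\varphi$ are locally strict, then $\mathbf H$ is locally strict; (d) if $\mathbf F$ is complete and splittable and each $\mathbf G\in\varphi$ has bounded chains, then $\mathbf H$ is complete; and if $\mathbf F$ has strict branches and is splittable and each $\mathbf G\in\varphi$ has bounded chains, then $\mathbf H$ has strict branches; (e) if $\mathbf F$ and each $\mathbf G\in\varphi$ are open in a space $X$, then $\mathbf H$ is open in the subspace $X\setminus\mathrm{loss}(\mathbf F,\varphi)$ of $X$.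
   Context: Trees: a tree is a pair $(Q,<)$ with $<$ irreflexive transitive and predecessor sets well-ordered; $\parallel$ = incomparable; $\mathrm{sons}(x)$ = immediate successors; $\max$ = maximal nodes; $0$ = least node; chain, branch (maximal chain); bounded chains: every nonempty chain has an upper bound node; $A{\downarrow}=\{v:\exists a\in A\ a\le v\}$; for an antichain $A$ and $x\in A{\downarrow}$, $\mathrm{root}(x,A)$ is the unique $r\in A$, $r\le x$. A graft for a tree $\mathcal T$ is a tree $\mathcal G$ with more than one node, least node $0_{\mathcal G}\in\mathrm{nodes}\,\mathcal T$, $\max\mathcal G\subseteq\{v\in\mathrm{nodes}\,\mathcal T:v>_{\mathcal T}0_{\mathcal G}\}$ an antichain in $\mathcal T$, and $\mathrm{impl}\,\mathcal G:=\mathrm{nodes}\,\mathcal G\setminus(\{0_{\mathcal G}\}\cup\max\mathcal G)$ disjoint from $\mathrm{nodes}\,\mathcal T$; $\mathrm{expl}(\mathcal T,\mathcal G)=\{v:v>_{\mathcal T}0_{\mathcal G}\}\setminus(\max\mathcal G){\downarrow}_{\mathcal T}$. A consistent family $\gamma$ of grafts for $\mathcal T$: members are grafts with pairwise disjoint implants and for distinct $\mathcal D,\mathcal E$: $0_{\mathcal D}\parallel_{\mathcal T}0_{\mathcal E}$ or $0_{\mathcal D}\in(\max\mathcal E){\downarrow}_{\mathcal T}$ or $0_{\mathcal E}\in(\max\mathcal D){\downarrow}_{\mathcal T}$. $\mathrm{supp}(\mathcal T,\gamma)=\mathrm{nodes}\,\mathcal T\setminus\bigcup_{\mathcal G\in\gamma}\mathrm{expl}(\mathcal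 T,\mathcal G)$. $\mathrm{hybr}(\mathcal T,\gamma)$ is the tree on $\mathrm{supp}(\mathcal T,\gamma)\cup\bigcup_{\mathcal G\in\gamma}\mathrm{impl}\,\mathcal G$ with $x<y$ iff: (b1) $x,y\in\mathrm{supp}$, $x<_{\mathcal T}y$; (b2) $x,y\in\mathrm{impl}\,\mathcal G$, $x<_{\mathcal G}y$; (b3) $x\in\mathrm{supp}$, $y\in\mathrm{impl}\,\mathcal G$, $x\le_{\mathcal T}0_{\mathcal G}$; (b4) $x\in\mathrm{impl}\,\mathcal G$, $y\in\mathrm{supp}\cap(\max\mathcal G){\downarrow}_{\mathcal T}$, $x<_{\mathcal G}\mathrm{root}_{\mathcal T}(y,\max\mathcal G)$; or (b5) $x\in\mathrm{impl}\,\mathcal D$, $y\in\mathrm{impl}\,\mathcal E$ ($\mathcal D\neq\mathcal E$), $0_{\mathcal E}\in(\max\mathcal D){\downarrow}_{\mathcal T}$, $x<_{\mathcal D}\mathrm{root}_{\mathcal T}(0_{\mathcal E},\max\mathcal D)$. Foliage trees: $\mathbf F=(\mathcal T,l)$ with $\mathcal T$ a tree (skeleton $\mathrm{skel}\,\mathbf F$) and leaves $\mathbf F_x=l(x)$; tree notions for $\mathbf F$ refer to the skeleton; $\mathrm{fruit}_{\mathbf F}(A)=\bigcap_{x\in A}\mathbf F_x$. $\mathbf F$ is nonincreasing if $x\le y\Rightarrow\mathbf F_y\subseteq\mathbf F_x$; splittable if incomparable nodes have disjoint leaves; locally strict if each non-maximal $\mathbf F_x$ is the union of the pairwise disjoint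 family $(\mathbf F_s)_{s\in\mathrm{sons}(x)}$; complete if it has a node and every branch has nonempty fruit; has strict branches if it has a node and every branch has singleton fruit; open in $X$ if all leaves are open in $X$. A foliage graft for nonincreasing $\mathbf F$ is a nonincreasing foliage tree $\mathbf G$ such that $\mathrm{skel}\,\mathbf G$ is a graft for $\mathrm{skel}\,\mathbf F$, $\mathbf G_{0_{\mathbf G}}\subseteq\mathbf F_{0_{\mathbf G}}$, and $\mathbf G_m=\mathbf F_m$ for all $m\in\max\mathbf G$; $\mathrm{cut}(\mathbf F,\mathbf G)=\mathbf F_{0_{\mathbf G}}\setminus\mathbf G_{0_{\mathbf G}}$. $\varphi$ is a consistent family of foliage grafts for $\mathbf F$ if each member is a foliage graft for $\mathbf F$, distinct members have distinct skeletons, and $\{\mathrm{skel}\,\mathbf G:\mathbf G\in\varphi\}$ is a consistent family of grafts for $\mathrm{skel}\,\mathbf F$; $\mathrm{loss}(\mathbf F,\varphi)=\bigcup_{\mathbf G\in\varphi}\mathrm{cut}(\mathbf F,\mathbf G)$; $\mathrm{supp}(\mathbf F,\varphi)=\mathrm{supp}(\mathrm{skel}\,\mathbf F,\{\mathrm{skel}\,\mathbf G:\mathbf G\in\varphi\})$. The foliage hybrid $\mathrm{fhybr}(\mathbf F,\varphi)$ is the foliage tree $\mathbf H$ with skeleton $\mathrm{hybr}(\mathrm{skel}\,\mathbf F,\{\mathrm{skel}\,\mathbf G:\mathbf G\in\varphi\})$ and leaves $\mathbf H_x=\mathbf G_x\setminus\mathrm{loss}(\mathbf F,\varphi)$ if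 $x\in\mathrm{impl}\,\mathbf G$ for some $\mathbf G\in\varphi$, and $\mathbf H_x=\mathbf F_x\setminus\mathrm{loss}(\mathbf F,\varphi)$ if $x\in\mathrm{supp}(\mathbf F,\varphi)$. *)

theory Defs
  imports "HOL-Analysis.Analysis"
begin

record 'n ptree =
  tnodes :: "'n set"
  tless  :: "'n \<Rightarrow> 'n \<Rightarrow> bool"

definition is_tree :: "'n ptree \<Rightarrow> bool" where
  "is_tree T \<longleftrightarrow>
     (\<forall>x y. tless T x y \<longrightarrow> x \<in> tnodes T \<and> y \<in> tnodes T) \<and>
     (\<forall>x. \<not> tless T x x) \<and>
     (\<forall>x y z. tless T x y \<longrightarrow> tless T y z \<longrightarrow> tless T x z) \<and>
     (\<forall>x \<in> tnodes T.
        (\<forall>a b. tless T a x \<longrightarrow> tless T b x \<longrightarrow> a = b \<or> tless T a b \<or> tless T b a) \<and>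
        (\<forall>S. S \<subseteq> {y. tless T y x} \<longrightarrow> S \<noteq> {} \<longrightarrow>
             (\<exists>m \<in> S. \<forall>s \<in> S. s \<noteq> m \<longrightarrow> tless T m s)))"

definition tle :: "'n ptree \<Rightarrow> 'n \<Rightarrow> 'n \<Rightarrow> bool" where
  "tle T x y \<longleftrightarrow> tless T x y \<or> (x = y \<and> x \<in> tnodes T)"

definition incomp :: "'n ptree \<Rightarrow> 'n \<Rightarrow> 'n \<Rightarrow> bool" where
  "incomp T x y \<longleftrightarrow> x \<in> tnodes T \<and> y \<in> tnodes T \<and> \<not> tle T x y \<and> \<not> tle T y x"

definition sons :: "'n ptree \<Rightarrow> 'n \<Rightarrow> 'n set" where
  "sons T x = {y \<in> tnodes T. tless T x y \<and> \<not> (\<exists>z. tless T x z \<and> tless T z y)}"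

definition tmax :: "'n ptree \<Rightarrow> 'n set" where
  "tmax T = {x \<in> tnodes T. \<not> (\<exists>y. tless T x y)}"

definition has_least :: "'n ptree \<Rightarrow> bool" where
  "has_least T \<longleftrightarrow> (\<exists>r \<in> tnodes T. \<forall>y \<in> tnodes T. tle T r y)"

definition troot :: "'n ptree \<Rightarrow> 'n" where
  "troot T = (THE r. r \<in> tnodes T \<and> (\<forall>y \<in> tnodes T. tle T r y))"

definition is_chain :: "'n ptree \<Rightarrow> 'n set \<Rightarrow> bool" where
  "is_chain T C \<longleftrightarrow> C \<subseteq> tnodes T \<and> (\<forall>x \<in> C. \<forall>y \<in> C. tle T x y \<or> tle T y x)"

definition is_branch :: "'n ptree \<Rightarrow> 'n set \<Rightarrow> bool" where
  "is_branch T B \<longleftrightarrow> is_chain T B \<and> (\<forall>C. is_chain T C \<longrightarrow> B \<subseteq> C \<longrightarrow> C = B)"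

definition bounded_chains :: "'n ptree \<Rightarrow> bool" where
  "bounded_chains T \<longleftrightarrow>
     (\<forall>C. is_chain T C \<longrightarrow> C \<noteq> {} \<longrightarrow> (\<exists>u \<in> tnodes T. \<forall>c \<in> C. tle T c u))"

definition is_antichain :: "'n ptree \<Rightarrow> 'n set \<Rightarrow> bool" where
  "is_antichain T A \<longleftrightarrow> A \<subseteq> tnodes T \<and> (\<forall>x \<in> A. \<forall>y \<in> A. x \<noteq> y \<longrightarrow> incomp T x y)"

text \<open>The set written $A{\downarrow}$ in the paper: all nodes above some element of A.\<close>
definition dcl :: "'n ptree \<Rightarrow> 'n set \<Rightarrow> 'n set" where
  "dcl T A = {v \<in> tnodes T. \<exists>a \<in> A. tle T a v}"

definition rootin :: "'n ptree \<Rightarrow> 'n \<Rightarrow> 'n set \<Rightarrow> 'n" where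
  "rootin T x A = (THE r. r \<in> A \<and> tle T r x)"

definition impl :: "'n ptree \<Rightarrow> 'n set" where
  "impl G = tnodes G - ({troot G} \<union> tmax G)"

definition is_graft :: "'n ptree \<Rightarrow> 'n ptree \<Rightarrow> bool" where
  "is_graft T G \<longleftrightarrow> is_tree G \<and>
     (\<exists>x \<in> tnodes G. \<exists>y \<in> tnodes G. x \<noteq> y) \<and>
     has_least G \<and> troot G \<in> tnodes T \<and>
     tmax G \<subseteq> {v \<in> tnodes T. tless T (troot G) v} \<and>
     is_antichain T (tmax G) \<and>
     impl G \<inter> tnodes T = {}"

definition expl :: "'n ptree \<Rightarrow> 'n ptree \<Rightarrow> 'n set" where
  "expl T G = {v. tless T (troot G) v} - dcl T (tmax G)"

definition consistent_grafts :: "'n ptree \<Rightarrow> 'n ptree set \<Rightarrow> bool" where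
  "consistent_grafts T \<gamma> \<longleftrightarrow>
     (\<forall>G \<in> \<gamma>. is_graft T G) \<and>
     (\<forall>D \<in> \<gamma>. \<forall>E \<in> \<gamma>. D \<noteq> E \<longrightarrow>
        impl D \<inter> impl E = {} \<and>
        (incomp T (troot D) (troot E) \<or> troot D \<in> dcl T (tmax E) \<or> troot E \<in> dcl T (tmax D)))"

definition supp :: "'n ptree \<Rightarrow> 'n ptree set \<Rightarrow> 'n set" where
  "supp T \<gamma> = tnodes T - (\<Union>G \<in> \<gamma>. expl T G)"

definition hybr :: "'n ptree \<Rightarrow> 'n ptree set \<Rightarrow> 'n ptree" where
  "hybr T \<gamma> =
     \<lparr> tnodes = supp T \<gamma> \<union> (\<Union>G \<in> \<gamma>. impl G),
       tless = (\<lambda>x y.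
          (x \<in> supp T \<gamma> \<and> y \<in> supp T \<gamma> \<and> tless T x y) \<or>
          (\<exists>G \<in> \<gamma>. x \<in> impl G \<and> y \<in> impl G \<and> tless G x y) \<or>
          (\<exists>G \<in> \<gamma>. x \<in> supp T \<gamma> \<and> y \<in> impl G \<and> tle T x (troot G)) \<or>
          (\<exists>G \<in> \<gamma>. x \<in> impl G \<and> y \<in> supp T \<gamma> \<and> y \<in> dcl T (tmax G) \<and>
                    tless G x (rootin T y (tmax G))) \<or>
          (\<exists>D \<in> \<gamma>. \<exists>E \<in> \<gamma>. D \<noteq> E \<and> x \<in> impl D \<and> y \<in> impl E \<and>
                    troot E \<in> dcl T (tmax D) \<and>
                    tless D x (rootin T (troot E) (tmax D)))) \<rparr>"

type_synonym ('n, 'a) ftree = "'n ptree \<times> ('n \<Rightarrow> 'a set)"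

abbreviation skel :: "('n, 'a) ftree \<Rightarrow> 'n ptree" where "skel F \<equiv> fst F"
abbreviation leaf :: "('n, 'a) ftree \<Rightarrow> 'n \<Rightarrow> 'a set" where "leaf F x \<equiv> snd F x"

definition foliage_tree :: "('n, 'a) ftree \<Rightarrow> bool" where
  "foliage_tree F \<longleftrightarrow> is_tree (skel F)"

definition fruit :: "('n, 'a) ftree \<Rightarrow> 'n set \<Rightarrow> 'a set" where
  "fruit F A = (\<Inter>x \<in> A. leaf F x)"

definition nonincreasing :: "('n, 'a) ftree \<Rightarrow> bool" where
  "nonincreasing F \<longleftrightarrow> (\<forall>x y. tle (skel F) x y \<longrightarrow> leaf F y \<subseteq> leaf F x)"

definition splittable :: "('n, 'a) ftree \<Rightarrow> bool" where
  "splittable F \<longleftrightarrow> (\<forall>x y. incomp (skel F) x y \<longrightarrow> leaf F x \<inter> leaf F y = {})"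

definition locally_strict :: "('n, 'a) ftree \<Rightarrow> bool" where
  "locally_strict F \<longleftrightarrow>
     (\<forall>x \<in> tnodes (skel F) - tmax (skel F).
        leaf F x = (\<Union>s \<in> sons (skel F) x. leaf F s) \<and>
        (\<forall>s \<in> sons (skel F) x. \<forall>t \<in> sons (skel F) x. s \<noteq> t \<longrightarrow> leaf F s \<inter> leaf F t = {}))"

definition complete :: "('n, 'a) ftree \<Rightarrow> bool" where
  "complete F \<longleftrightarrow> tnodes (skel F) \<noteq> {} \<and>
     (\<forall>B. is_branch (skel F) B \<longrightarrow> fruit F B \<noteq> {})"

definition strict_branches :: "('n, 'a) ftree \<Rightarrow> bool" where
  "strict_branches F \<longleftrightarrow> tnodes (skel F) \<noteq> {} \<and>
     (\<forall>B. is_branch (skel F) B \<longrightarrow> (\<exists>p. fruit F B = {p}))"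

definition open_in :: "'a topology \<Rightarrow> ('n, 'a) ftree \<Rightarrow> bool" where
  "open_in X F \<longleftrightarrow> (\<forall>x \<in> tnodes (skel F). openin X (leaf F x))"

definition foliage_graft :: "('n, 'a) ftree \<Rightarrow> ('n, 'a) ftree \<Rightarrow> bool" where
  "foliage_graft F G \<longleftrightarrow>
     foliage_tree G \<and> nonincreasing G \<and>
     is_graft (skel F) (skel G) \<and>
     leaf G (troot (skel G)) \<subseteq> leaf F (troot (skel G)) \<and>
     (\<forall>m \<in> tmax (skel G). leaf G m = leaf F m)"

definition cut :: "('n, 'a) ftree \<Rightarrow> ('n, 'a) ftree \<Rightarrow> 'a set" where
  "cut F G = leaf F (troot (skel G)) - leaf G (troot (skel G))"

definition consistent_fgrafts :: "('n, 'a) ftree \<Rightarrow> ('n, 'a) ftree set \<Rightarrow> bool" where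
  "consistent_fgrafts F \<phi> \<longleftrightarrow>
     (\<forall>G \<in> \<phi>. foliage_graft F G) \<and>
     inj_on skel \<phi> \<and>
     consistent_grafts (skel F) (skel ` \<phi>)"

definition loss :: "('n, 'a) ftree \<Rightarrow> ('n, 'a) ftree set \<Rightarrow> 'a set" where
  "loss F \<phi> = (\<Union>G \<in> \<phi>. cut F G)"

definition fsupp :: "('n, 'a) ftree \<Rightarrow> ('n, 'a) ftree set \<Rightarrow> 'n set" where
  "fsupp F \<phi> = supp (skel F) (skel ` \<phi>)"

definition fhybr :: "('n, 'a) ftree \<Rightarrow> ('n, 'a) ftree set \<Rightarrow> ('n, 'a) ftree" where
  "fhybr F \<phi> =
     (hybr (skel F) (skel ` \<phi>),
      (\<lambda>x. if x \<in> fsupp F \<phi> then leaf F x - loss F \<phi>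
           else leaf (SOME G. G \<in> \<phi> \<and> x \<in> impl (skel G)) x - loss F \<phi>))"

end

theory Submission
  imports Defs
begin

section \<open>Generic tree lemmas\<close>

context fixes R :: "'n ptree" assumes tr: "is_tree R"
begin

lemma tr_nodes: "tless R x y \<Longrightarrow> x \<in> tnodes R \<and> y \<in> tnodes R"
  using tr unfolding is_tree_def by blast
lemma tr_irrefl: "\<not> tless R x x"
  using tr unfolding is_tree_def by blast
lemma tr_trans: "tless R x y \<Longrightarrow> tless R y z \<Longrightarrow> tless R x z"
  using tr unfolding is_tree_def by blast
lemma tr_asym: "tless R x y \<Longrightarrow> \<not> tless R y x"
  using tr_trans tr_irrefl by blast
lemma tr_lin: "tless R a c \<Longrightarrow> tless R b c \<Longrightarrow> a = b \<or> tless R a b \<or> tless R b a"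
  using tr tr_nodes unfolding is_tree_def by blast
lemma tr_wf: "x \<in> tnodes R \<Longrightarrow> S \<subseteq> {y. tless R y x} \<Longrightarrow> S \<noteq> {} \<Longrightarrow>
   \<exists>m \<in> S. \<forall>s \<in> S. s \<noteq> m \<longrightarrow> tless R m s"
proof -
  assume a: "x \<in> tnodes R" "S \<subseteq> {y. tless R y x}" "S \<noteq> {}"
  have "\<forall>S. S \<subseteq> {y. tless R y x} \<longrightarrow> S \<noteq> {} \<longrightarrow> (\<exists>m \<in> S. \<forall>s \<in> S. s \<noteq> m \<longrightarrow> tless R m s)"
    using tr a(1) unfolding is_tree_def by auto
  then show ?thesis using a by auto
qed

lemma less_imp_tle: "tless R x y \<Longrightarrow> tle R x y"
  unfolding tle_def by blast
lemma tle_refl: "x \<in> tnodes R \<Longrightarrow> tle R x x"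
  unfolding tle_def by blast
lemma tle_nodes: "tle R x y \<Longrightarrow> x \<in> tnodes R \<and> y \<in> tnodes R"
  unfolding tle_def using tr_nodes by blast
lemma tle_cases: "tle R x y \<Longrightarrow> x = y \<or> tless R x y"
  unfolding tle_def by blast
lemma tle_trans: "tle R x y \<Longrightarrow> tle R y z \<Longrightarrow> tle R x z"
  unfolding tle_def using tr_trans by blast
lemma tle_less_trans: "tle R x y \<Longrightarrow> tless R y z \<Longrightarrow> tless R x z"
  unfolding tle_def using tr_trans by blast
lemma less_tle_trans: "tless R x y \<Longrightarrow> tle R y z \<Longrightarrow> tless R x z"
  unfolding tle_def using tr_trans by blast
lemma tle_lin: "tle R a c \<Longrightarrow> tle R b c \<Longrightarrow> tle R a b \<or> tle R b a"
  unfolding tle_def using tr_lin tr_nodes by blast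
lemma tle_antisym: "tle R a b \<Longrightarrow> tle R b a \<Longrightarrow> a = b"
  unfolding tle_def using tr_asym by blast

lemma son_exists:
  assumes "tless R x y" shows "\<exists>s \<in> sons R x. tle R s y"
proof (cases "\<exists>z. tless R x z \<and> tless R z y")
  case False
  then show ?thesis using assms tr_nodes unfolding sons_def tle_def by blast
next
  case True
  let ?S = "{z. tless R x z \<and> tless R z y}"
  have y: "y \<in> tnodes R" using assms tr_nodes by blast
  obtain m where m: "m \<in> ?S" "\<forall>s \<in> ?S. s \<noteq> m \<longrightarrow> tless R m s"
    using tr_wf[OF y, of ?S] True by blast
  have "m \<in> sons R x"
    unfolding sons_def
  proof (safe)
    show "m \<in> tnodes R" using m tr_nodes by blast
    show "tless R x m" using m by blast
    fix z assume "tless R x z" "tless R z m"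
    then have "z \<in> ?S" using m tr_trans by blast
    then show False using m \<open>tless R z m\<close> tr_asym tr_irrefl by (metis (mono_tags, lifting) mem_Collect_eq)
  qed
  then show ?thesis using m unfolding tle_def by blast
qed

lemma root_least:
  assumes "has_least R"
  shows "troot R \<in> tnodes R \<and> (\<forall>y \<in> tnodes R. tle R (troot R) y)"
proof -
  obtain r where r: "r \<in> tnodes R" "\<forall>y \<in> tnodes R. tle R r y" using assms unfolding has_least_def by blast
  have "troot R = r" unfolding troot_def
    by (rule the_equality) (use r tle_antisym in blast)+
  then show ?thesis using r by simp
qed

lemma chain_upper_max:
  assumes bc: "bounded_chains R" and u: "u \<in> tnodes R"
  shows "\<exists>m \<in> tmax R. tle R u m"
proof -
  let ?A = "{C. is_chain R C \<and> u \<in> C}"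
  have "\<exists>M\<in>?A. \<forall>X\<in>?A. M \<subseteq> X \<longrightarrow> X = M"
  proof (rule Zorn_Lemma2, rule ballI)
    fix c assume c: "c \<in> chains ?A"
    show "\<exists>U\<in>?A. \<forall>X\<in>c. X \<subseteq> U"
    proof (cases "c = {}")
      case True
      have "{u} \<in> ?A" using u unfolding is_chain_def tle_def by auto
      then show ?thesis using True by blast
    next
      case False
      have cA: "c \<subseteq> ?A" and cc: "\<And>X Y. X \<in> c \<Longrightarrow> Y \<in> c \<Longrightarrow> X \<subseteq> Y \<or> Y \<subseteq> X"
        using c unfolding chains_def chain_subset_def by auto
      have "is_chain R (\<Union>c)"
        unfolding is_chain_def
      proof (intro conjI ballI)
        show "\<Union>c \<subseteq> tnodes R" using cA unfolding is_chain_def by blast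
        fix x y assume "x \<in> \<Union>c" "y \<in> \<Union>c"
        then obtain X Y where XY: "X \<in> c" "Y \<in> c" "x \<in> X" "y \<in> Y" by blast
        show "tle R x y \<or> tle R y x"
        proof (cases "X \<subseteq> Y")
          case True
          then have "is_chain R Y" "x \<in> Y" "y \<in> Y" using XY cA by auto
          then show ?thesis unfolding is_chain_def by blast
        next
          case False
          then have "Y \<subseteq> X" using cc XY by blast
          then have "is_chain R X" "x \<in> X" "y \<in> X" using XY cA by auto
          then show ?thesis unfolding is_chain_def by blast
        qed
      qed
      moreover have "u \<in> \<Union>c" using False cA by blast
      ultimately show ?thesis by blast
    qed
  qed
  then obtain M where M: "is_chain R M" "u \<in> M" "\<And>X. is_chain R X \<Longrightarrow> u \<in> X \<Longrightarrow> M \<subseteq> X \<Longrightarrow> X = M"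
    by blast
  have "M \<noteq> {}" using M by blast
  then obtain v where v: "v \<in> tnodes R" "\<forall>c \<in> M. tle R c v"
    using bc M(1) unfolding bounded_chains_def by blast
  have ch: "is_chain R (insert w M)" if "w \<in> tnodes R" "\<forall>c \<in> M. tle R c w" for w
    using M(1) that unfolding is_chain_def tle_def by auto
  have vM: "v \<in> M"
  proof -
    have "insert v M = M" using M(3)[OF ch[OF v]] M(2) by blast
    then show ?thesis by blast
  qed
  have "v \<in> tmax R"
    unfolding tmax_def
  proof (safe)
    show "v \<in> tnodes R" by fact
    fix w assume w: "tless R v w"
    have wn: "w \<in> tnodes R" using w tr_nodes by blast
    have "\<forall>c \<in> M. tle R c w"
    proof
      fix c assume "c \<in> M"
      then have "tle R c v" using v by blast
      then show "tle R c w" using w unfolding tle_def using tr_trans by blast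
    qed
    then have "insert w M = M" using M(3)[OF ch[OF wn]] M(2) by blast
    then have "w \<in> M" by blast
    then have "tle R w v" using v by blast
    then show False using w tr_asym tr_irrefl unfolding tle_def by blast
  qed
  then show ?thesis using v M by blast
qed

end

section \<open>Skeleton-level hybrid lemmas\<close>

locale SK =
  fixes T :: "'n ptree" and \<Gamma> :: "'n ptree set"
  assumes T: "is_tree T" and cg: "consistent_grafts T \<Gamma>"
begin

abbreviation "sp \<equiv> supp T \<Gamma>"
abbreviation "HT \<equiv> hybr T \<Gamma>"
abbreviation "hl \<equiv> tless (hybr T \<Gamma>)"

lemma gr: "g \<in> \<Gamma> \<Longrightarrow> is_graft T g" using cg unfolding consistent_grafts_def by blast
lemma g_tree: "g \<in> \<Gamma> \<Longrightarrow> is_tree g" using gr unfolding is_graft_def by blast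
lemma g0: "g \<in> \<Gamma> \<Longrightarrow> troot g \<in> tnodes g \<and> (\<forall>y\<in>tnodes g. tle g (troot g) y)"
  using gr root_least[OF g_tree] unfolding is_graft_def by blast
lemma g0T: "g \<in> \<Gamma> \<Longrightarrow> troot g \<in> tnodes T" using gr unfolding is_graft_def by blast
lemma gmax: "g \<in> \<Gamma> \<Longrightarrow> m \<in> tmax g \<Longrightarrow> m \<in> tnodes T \<and> tless T (troot g) m"
  using gr unfolding is_graft_def by blast
lemma gmax_eq: "g \<in> \<Gamma> \<Longrightarrow> m1 \<in> tmax g \<Longrightarrow> m2 \<in> tmax g \<Longrightarrow> tle T m1 m2 \<Longrightarrow> m1 = m2"
  using gr unfolding is_graft_def is_antichain_def incomp_def by blast
lemma impl_T: "g \<in> \<Gamma> \<Longrightarrow> x \<in> impl g \<Longrightarrow> x \<notin> tnodes T"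
  using gr unfolding is_graft_def by blast
lemma impl_sub: "x \<in> impl g \<Longrightarrow> x \<in> tnodes g \<and> x \<noteq> troot g \<and> x \<notin> tmax g"
  unfolding impl_def by blast
lemma g_cases: "x \<in> tnodes g \<Longrightarrow> x = troot g \<or> x \<in> impl g \<or> x \<in> tmax g"
  unfolding impl_def by blast
lemma max_nodes: "m \<in> tmax g \<Longrightarrow> m \<in> tnodes g \<and> \<not> tless g m y"
  unfolding tmax_def by blast
lemma root_less: "g \<in> \<Gamma> \<Longrightarrow> x \<in> tnodes g \<Longrightarrow> x \<noteq> troot g \<Longrightarrow> tless g (troot g) x"
  using g0 unfolding tle_def by blast
lemma root_not_max: "g \<in> \<Gamma> \<Longrightarrow> troot g \<notin> tmax g"
proof
  assume a: "g \<in> \<Gamma>" "troot g \<in> tmax g"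
  obtain x y where "x \<in> tnodes g" "y \<in> tnodes g" "x \<noteq> y" using gr[OF a(1)] unfolding is_graft_def by blast
  then obtain z where "z \<in> tnodes g" "z \<noteq> troot g" by blast
  then have "tless g (troot g) z" using root_less a by blast
  then show False using a(2) unfolding tmax_def by blast
qed
lemma root_less_max: "g \<in> \<Gamma> \<Longrightarrow> m \<in> tmax g \<Longrightarrow> tless g (troot g) m"
  using root_less root_not_max max_nodes by metis
lemma root_less_impl: "g \<in> \<Gamma> \<Longrightarrow> x \<in> impl g \<Longrightarrow> tless g (troot g) x"
  using root_less impl_sub by metis

lemma dcl_I: "m \<in> A \<Longrightarrow> tle T m y \<Longrightarrow> y \<in> dcl T A"
  unfolding dcl_def tle_def using tr_nodes[OF T] by blast

lemma rootin_eq: "g \<in> \<Gamma> \<Longrightarrow> m \<in> tmax g \<Longrightarrow> tle T m y \<Longrightarrow> rootin T y (tmax g) = m"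
  unfolding rootin_def
proof (rule the_equality)
  assume "g \<in> \<Gamma>" "m \<in> tmax g" "tle T m y"
  then show "m \<in> tmax g \<and> tle T m y" by blast
  fix r assume a: "r \<in> tmax g \<and> tle T r y"
  then have "tle T r m \<or> tle T m r" using tle_lin[OF T] \<open>tle T m y\<close> by blast
  then show "r = m" using gmax_eq \<open>g \<in> \<Gamma>\<close> \<open>m \<in> tmax g\<close> a by metis
qed

lemma rootin: "g \<in> \<Gamma> \<Longrightarrow> y \<in> dcl T (tmax g) \<Longrightarrow>
   rootin T y (tmax g) \<in> tmax g \<and> tle T (rootin T y (tmax g)) y"
proof -
  assume a: "g \<in> \<Gamma>" "y \<in> dcl T (tmax g)"
  then obtain m where "m \<in> tmax g" "tle T m y" unfolding dcl_def by blast
  then show ?thesis using rootin_eq[OF a(1)] by metis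
qed

lemma dcl_gt: "g \<in> \<Gamma> \<Longrightarrow> y \<in> dcl T (tmax g) \<Longrightarrow> tless T (troot g) y"
  using rootin gmax tle_def less_tle_trans[OF T] by metis

lemma cons: "D \<in> \<Gamma> \<Longrightarrow> E \<in> \<Gamma> \<Longrightarrow> D \<noteq> E \<Longrightarrow> impl D \<inter> impl E = {} \<and>
   (incomp T (troot D) (troot E) \<or> troot D \<in> dcl T (tmax E) \<or> troot E \<in> dcl T (tmax D))"
  using cg unfolding consistent_grafts_def by blast

lemma impl_unique: "D \<in> \<Gamma> \<Longrightarrow> E \<in> \<Gamma> \<Longrightarrow> x \<in> impl D \<Longrightarrow> x \<in> impl E \<Longrightarrow> D = E"
  using cons by blast

lemma roots_distinct: "D \<in> \<Gamma> \<Longrightarrow> E \<in> \<Gamma> \<Longrightarrow> D \<noteq> E \<Longrightarrow> troot D \<noteq> troot E"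
proof
  assume a: "D \<in> \<Gamma>" "E \<in> \<Gamma>" "D \<noteq> E" "troot D = troot E"
  from cons[OF a(1-3)] show False
  proof (elim conjE disjE)
    assume "incomp T (troot D) (troot E)" then show False using a(4) unfolding incomp_def tle_def by blast
  next
    assume "troot D \<in> dcl T (tmax E)" then show False using dcl_gt[OF a(2)] a(4) tr_irrefl[OF T] by metis
  next
    assume "troot E \<in> dcl T (tmax D)" then show False using dcl_gt[OF a(1)] a(4) tr_irrefl[OF T] by metis
  qed
qed

lemma supp_iff: "x \<in> sp \<longleftrightarrow> x \<in> tnodes T \<and> (\<forall>g\<in>\<Gamma>. tless T (troot g) x \<longrightarrow> x \<in> dcl T (tmax g))"
  unfolding supp_def expl_def by blast

lemma supp_dcl: "x \<in> sp \<Longrightarrow> g \<in> \<Gamma> \<Longrightarrow> tless T (troot g) x \<Longrightarrow> x \<in> dcl T (tmax g)"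
  using supp_iff by blast
lemma supp_T: "x \<in> sp \<Longrightarrow> x \<in> tnodes T" using supp_iff by blast
lemma supp_impl: "x \<in> sp \<Longrightarrow> g \<in> \<Gamma> \<Longrightarrow> x \<notin> impl g" using supp_T impl_T by blast

lemma root_supp: "g \<in> \<Gamma> \<Longrightarrow> troot g \<in> sp"
  unfolding supp_iff
proof (intro conjI ballI impI)
  assume g: "g \<in> \<Gamma>"
  then show "troot g \<in> tnodes T" using g0T by blast
  fix E assume E: "E \<in> \<Gamma>" "tless T (troot E) (troot g)"
  have "E \<noteq> g" using E tr_irrefl[OF T] by blast
  from cons[OF g E(1) this[symmetric]] show "troot g \<in> dcl T (tmax E)"
  proof (elim conjE disjE)
    assume "incomp T (troot g) (troot E)" then show ?thesis using E unfolding incomp_def tle_def by blast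
  qed (use dcl_gt[OF g] E tr_asym[OF T] in blast)+
qed

lemma max_supp: "g \<in> \<Gamma> \<Longrightarrow> m \<in> tmax g \<Longrightarrow> m \<in> sp"
  unfolding supp_iff
proof (intro conjI ballI impI)
  assume g: "g \<in> \<Gamma>" and m: "m \<in> tmax g"
  then show "m \<in> tnodes T" using gmax by blast
  fix E assume E: "E \<in> \<Gamma>" "tless T (troot E) m"
  show "m \<in> dcl T (tmax E)"
  proof (cases "E = g")
    case True then show ?thesis using m dcl_I gmax[OF g m] unfolding tle_def by blast
  next
    case False
    have gm: "tless T (troot g) m" using gmax[OF g m] by blast
    from cons[OF g E(1) False[symmetric]] show ?thesis
    proof (elim conjE disjE)
      assume "incomp T (troot g) (troot E)"
      then show ?thesis using E gm tr_lin[OF T] unfolding incomp_def tle_def by metis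
    next
      assume "troot g \<in> dcl T (tmax E)"
      then obtain m' where "m' \<in> tmax E" "tle T m' (troot g)" using rootin[OF E(1)] by blast
      then show ?thesis using dcl_I gm tle_def less_tle_trans[OF T] tle_less_trans[OF T] by metis
    next
      assume "troot E \<in> dcl T (tmax g)"
      then obtain m' where m': "m' \<in> tmax g" "tle T m' (troot E)" using rootin[OF g] by blast
      then have "tless T m' m" using E tle_less_trans[OF T] by blast
      then have "m' = m" using gmax_eq[OF g m' (1) m] unfolding tle_def by blast
      then show ?thesis using \<open>tless T m' m\<close> tr_irrefl[OF T] by blast
    qed
  qed
qed

lemma H_nodes: "x \<in> tnodes HT \<longleftrightarrow> x \<in> sp \<or> (\<exists>g\<in>\<Gamma>. x \<in> impl g)"
  unfolding hybr_def by simp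

lemma hl_def': "hl x y \<longleftrightarrow>
          (x \<in> sp \<and> y \<in> sp \<and> tless T x y) \<or>
          (\<exists>G \<in> \<Gamma>. x \<in> impl G \<and> y \<in> impl G \<and> tless G x y) \<or>
          (\<exists>G \<in> \<Gamma>. x \<in> sp \<and> y \<in> impl G \<and> tle T x (troot G)) \<or>
          (\<exists>G \<in> \<Gamma>. x \<in> impl G \<and> y \<in> sp \<and> y \<in> dcl T (tmax G) \<and>
                    tless G x (rootin T y (tmax G))) \<or>
          (\<exists>D \<in> \<Gamma>. \<exists>E \<in> \<Gamma>. D \<noteq> E \<and> x \<in> impl D \<and> y \<in> impl E \<and>
                    troot E \<in> dcl T (tmax D) \<and>
                    tless D x (rootin T (troot E) (tmax D)))"
  unfolding hybr_def by simp

lemma impl_iff: "g \<in> \<Gamma> \<Longrightarrow> x \<in> impl g \<Longrightarrow> G \<in> \<Gamma> \<Longrightarrow> x \<in> impl G \<longleftrightarrow> G = g"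
  using impl_unique by blast
lemma impl_notsp: "g \<in> \<Gamma> \<Longrightarrow> x \<in> impl g \<Longrightarrow> x \<notin> sp"
  using supp_impl by blast

lemma hl_SS: "x \<in> sp \<Longrightarrow> y \<in> sp \<Longrightarrow> hl x y \<longleftrightarrow> tless T x y"
proof -
  assume a: "x \<in> sp" "y \<in> sp"
  then have "\<forall>G\<in>\<Gamma>. x \<notin> impl G \<and> y \<notin> impl G" using supp_impl by blast
  then show ?thesis using a unfolding hl_def' by auto
qed
lemma hl_II: "g \<in> \<Gamma> \<Longrightarrow> x \<in> impl g \<Longrightarrow> y \<in> impl g \<Longrightarrow> hl x y \<longleftrightarrow> tless g x y"
proof -
  assume a: "g \<in> \<Gamma>" "x \<in> impl g" "y \<in> impl g"
  have "x \<notin> sp" "y \<notin> sp" using a impl_notsp by blast+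
  moreover have "\<And>G. G \<in> \<Gamma> \<Longrightarrow> x \<in> impl G \<longleftrightarrow> G = g" "\<And>G. G \<in> \<Gamma> \<Longrightarrow> y \<in> impl G \<longleftrightarrow> G = g"
    using a impl_iff by blast+
  ultimately show ?thesis using a unfolding hl_def' by auto
qed
lemma hl_SI: "g \<in> \<Gamma> \<Longrightarrow> x \<in> sp \<Longrightarrow> y \<in> impl g \<Longrightarrow> hl x y \<longleftrightarrow> tle T x (troot g)"
proof -
  assume a: "g \<in> \<Gamma>" "x \<in> sp" "y \<in> impl g"
  have "y \<notin> sp" using a impl_notsp by blast+
  moreover have "\<And>G. G \<in> \<Gamma> \<Longrightarrow> x \<notin> impl G" "\<And>G. G \<in> \<Gamma> \<Longrightarrow> y \<in> impl G \<longleftrightarrow> G = g"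
    using a impl_iff supp_impl by blast+
  ultimately show ?thesis using a unfolding hl_def' by auto
qed
lemma hl_IS: "g \<in> \<Gamma> \<Longrightarrow> x \<in> impl g \<Longrightarrow> y \<in> sp \<Longrightarrow>
   hl x y \<longleftrightarrow> y \<in> dcl T (tmax g) \<and> tless g x (rootin T y (tmax g))"
proof -
  assume a: "g \<in> \<Gamma>" "x \<in> impl g" "y \<in> sp"
  have "x \<notin> sp" using a impl_notsp by blast+
  moreover have "\<And>G. G \<in> \<Gamma> \<Longrightarrow> y \<notin> impl G" "\<And>G. G \<in> \<Gamma> \<Longrightarrow> x \<in> impl G \<longleftrightarrow> G = g"
    using a impl_iff supp_impl by blast+
  ultimately show ?thesis using a unfolding hl_def' by auto
qed
lemma hl_II2: "D \<in> \<Gamma> \<Longrightarrow> E \<in> \<Gamma> \<Longrightarrow> D \<noteq> E \<Longrightarrow> x \<in> impl D \<Longrightarrow> y \<in> impl E \<Longrightarrow>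
   hl x y \<longleftrightarrow> troot E \<in> dcl T (tmax D) \<and> tless D x (rootin T (troot E) (tmax D))"
proof -
  assume a: "D \<in> \<Gamma>" "E \<in> \<Gamma>" "D \<noteq> E" "x \<in> impl D" "y \<in> impl E"
  have "x \<notin> sp" "y \<notin> sp" using a impl_notsp by blast+
  moreover have "\<And>G. G \<in> \<Gamma> \<Longrightarrow> x \<in> impl G \<longleftrightarrow> G = D" "\<And>G. G \<in> \<Gamma> \<Longrightarrow> y \<in> impl G \<longleftrightarrow> G = E"
    using a impl_iff by blast+
  ultimately show ?thesis using a unfolding hl_def' by auto
qed

lemma hl_nodes: "hl x y \<Longrightarrow> x \<in> tnodes HT \<and> y \<in> tnodes HT"
  unfolding hl_def' H_nodes by blast


lemma node_cases: "x \<in> tnodes HT \<Longrightarrow> (x \<in> sp \<Longrightarrow> P) \<Longrightarrow> (\<And>g. g \<in> \<Gamma> \<Longrightarrow> x \<in> impl g \<Longrightarrow> P) \<Longrightarrow> P"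
  using H_nodes by blast

lemmas Tlt = tr_trans[OF T] tle_less_trans[OF T] less_tle_trans[OF T] tle_trans[OF T]
lemmas Tle = less_imp_tle[OF T]

lemma rootin_ext: "g \<in> \<Gamma> \<Longrightarrow> y \<in> dcl T (tmax g) \<Longrightarrow> tle T y z \<Longrightarrow>
   z \<in> dcl T (tmax g) \<and> rootin T z (tmax g) = rootin T y (tmax g)"
proof -
  assume a: "g \<in> \<Gamma>" "y \<in> dcl T (tmax g)" "tle T y z"
  have m: "rootin T y (tmax g) \<in> tmax g" "tle T (rootin T y (tmax g)) y" using rootin a by blast+
  then have "tle T (rootin T y (tmax g)) z" using a(3) Tlt by blast
  then show ?thesis using m dcl_I rootin_eq[OF a(1) m(1)] by blast
qed

lemma root_dcl_lt: "D \<in> \<Gamma> \<Longrightarrow> troot E \<in> dcl T (tmax D) \<Longrightarrow> tless T (troot D) (troot E)"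
  using dcl_gt by blast

lemma trans_SSS: "x \<in> sp \<Longrightarrow> y \<in> sp \<Longrightarrow> z \<in> sp \<Longrightarrow> hl x y \<Longrightarrow> hl y z \<Longrightarrow> hl x z"
  using hl_SS tr_trans[OF T] by blast
lemma trans_SSI: "E \<in> \<Gamma> \<Longrightarrow> x \<in> sp \<Longrightarrow> y \<in> sp \<Longrightarrow> z \<in> impl E \<Longrightarrow> hl x y \<Longrightarrow> hl y z \<Longrightarrow> hl x z"
proof -
  assume a: "E \<in> \<Gamma>" "x \<in> sp" "y \<in> sp" "z \<in> impl E" "hl x y" "hl y z"
  have "tless T x y" using hl_SS[OF a(2,3)] a(5) by blast
  moreover have "tle T y (troot E)" using hl_SI[OF a(1,3,4)] a(6) by blast
  ultimately have "tle T x (troot E)" using less_tle_trans[OF T] Tle by blast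
  then show ?thesis using hl_SI[OF a(1,2,4)] by blast
qed
lemma trans_SIS: "E \<in> \<Gamma> \<Longrightarrow> x \<in> sp \<Longrightarrow> y \<in> impl E \<Longrightarrow> z \<in> sp \<Longrightarrow> hl x y \<Longrightarrow> hl y z \<Longrightarrow> hl x z"
proof -
  assume a: "E \<in> \<Gamma>" "x \<in> sp" "y \<in> impl E" "z \<in> sp" "hl x y" "hl y z"
  have "tle T x (troot E)" using hl_SI a by blast
  moreover have "tless T (troot E) z" using hl_IS a dcl_gt by blast
  ultimately show ?thesis using hl_SS a Tlt by metis
qed
lemma trans_SII: "D \<in> \<Gamma> \<Longrightarrow> E \<in> \<Gamma> \<Longrightarrow> x \<in> sp \<Longrightarrow> y \<in> impl D \<Longrightarrow> z \<in> impl E \<Longrightarrow> hl x y \<Longrightarrow> hl y z \<Longrightarrow> hl x z"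
proof -
  assume a: "D \<in> \<Gamma>" "E \<in> \<Gamma>" "x \<in> sp" "y \<in> impl D" "z \<in> impl E" "hl x y" "hl y z"
  have xD: "tle T x (troot D)" using hl_SI a by blast
  show ?thesis
  proof (cases "D = E")
    case True then show ?thesis using xD a hl_SI by blast
  next
    case False
    then have "troot E \<in> dcl T (tmax D)" using hl_II2 a by blast
    then have "tless T (troot D) (troot E)" using dcl_gt a by blast
    then show ?thesis using xD a hl_SI Tlt Tle by metis
  qed
qed
lemma trans_ISS: "D \<in> \<Gamma> \<Longrightarrow> x \<in> impl D \<Longrightarrow> y \<in> sp \<Longrightarrow> z \<in> sp \<Longrightarrow> hl x y \<Longrightarrow> hl y z \<Longrightarrow> hl x z"
proof -
  assume a: "D \<in> \<Gamma>" "x \<in> impl D" "y \<in> sp" "z \<in> sp" "hl x y" "hl y z"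
  have y: "y \<in> dcl T (tmax D)" "tless D x (rootin T y (tmax D))" using hl_IS a by blast+
  have "tle T y z" using hl_SS a Tle by blast
  then have "z \<in> dcl T (tmax D) \<and> rootin T z (tmax D) = rootin T y (tmax D)"
    using rootin_ext a(1) y(1) by blast
  then show ?thesis using y hl_IS a by auto
qed
lemma trans_ISI: "D \<in> \<Gamma> \<Longrightarrow> E \<in> \<Gamma> \<Longrightarrow> x \<in> impl D \<Longrightarrow> y \<in> sp \<Longrightarrow> z \<in> impl E \<Longrightarrow> hl x y \<Longrightarrow> hl y z \<Longrightarrow> hl x z"
proof -
  assume a: "D \<in> \<Gamma>" "E \<in> \<Gamma>" "x \<in> impl D" "y \<in> sp" "z \<in> impl E" "hl x y" "hl y z"
  have y: "y \<in> dcl T (tmax D)" "tless D x (rootin T y (tmax D))" using hl_IS a by blast+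
  have yE: "tle T y (troot E)" using hl_SI a by blast
  then have r: "troot E \<in> dcl T (tmax D) \<and> rootin T (troot E) (tmax D) = rootin T y (tmax D)"
    using rootin_ext a(1) y(1) by blast
  show ?thesis
  proof (cases "D = E")
    case True
    then have "tless T (troot E) y" using dcl_gt a y by blast
    then show ?thesis using yE Tlt tr_irrefl[OF T] by metis
  next
    case False
    then show ?thesis using r y hl_II2 a by auto
  qed
qed
lemma trans_IIS: "D \<in> \<Gamma> \<Longrightarrow> E \<in> \<Gamma> \<Longrightarrow> x \<in> impl D \<Longrightarrow> y \<in> impl E \<Longrightarrow> z \<in> sp \<Longrightarrow> hl x y \<Longrightarrow> hl y z \<Longrightarrow> hl x z"
proof -
  assume a: "D \<in> \<Gamma>" "E \<in> \<Gamma>" "x \<in> impl D" "y \<in> impl E" "z \<in> sp" "hl x y" "hl y z"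
  have z: "z \<in> dcl T (tmax E)" "tless E y (rootin T z (tmax E))" using hl_IS a by blast+
  show ?thesis
  proof (cases "D = E")
    case True
    then have "tless D x y" using hl_II a by blast
    then show ?thesis using z True hl_IS a tr_trans[OF g_tree] by metis
  next
    case False
    then have r: "troot E \<in> dcl T (tmax D)" "tless D x (rootin T (troot E) (tmax D))"
      using hl_II2 a by blast+
    have "tle T (troot E) z" using dcl_gt[OF a(2) z(1)] Tle by blast
    then have "z \<in> dcl T (tmax D) \<and> rootin T z (tmax D) = rootin T (troot E) (tmax D)"
      using rootin_ext a(1) r(1) by blast
    then show ?thesis using r hl_IS a by auto
  qed
qed
lemma trans_III: "D \<in> \<Gamma> \<Longrightarrow> E \<in> \<Gamma> \<Longrightarrow> F \<in> \<Gamma> \<Longrightarrow> x \<in> impl D \<Longrightarrow> y \<in> impl E \<Longrightarrow> z \<in> impl F \<Longrightarrow> hl x y \<Longrightarrow> hl y z \<Longrightarrow> hl x z"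
proof -
  assume a: "D \<in> \<Gamma>" "E \<in> \<Gamma>" "F \<in> \<Gamma>" "x \<in> impl D" "y \<in> impl E" "z \<in> impl F" "hl x y" "hl y z"
  show ?thesis
  proof (cases "D = E")
    case DE: True
    then have xy: "tless D x y" using hl_II a by blast
    show ?thesis
    proof (cases "E = F")
      case True then show ?thesis using DE xy a hl_II tr_trans[OF g_tree] by metis
    next
      case False
      then have "troot F \<in> dcl T (tmax E)" "tless E y (rootin T (troot F) (tmax E))" using hl_II2 a by blast+
      then show ?thesis using DE False xy a hl_II2 tr_trans[OF g_tree] by metis
    qed
  next
    case DE: False
    then have r: "troot E \<in> dcl T (tmax D)" "tless D x (rootin T (troot E) (tmax D))"
      using hl_II2 a by blast+
    show ?thesis
    proof (cases "E = F")
      case True then show ?thesis using DE r a hl_II2 by metis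
    next
      case EF: False
      then have r2: "troot F \<in> dcl T (tmax E)" "tless E y (rootin T (troot F) (tmax E))" using hl_II2 a by blast+
      have "tle T (troot E) (troot F)" using dcl_gt[OF a(2) r2(1)] Tle by blast
      then have q: "troot F \<in> dcl T (tmax D) \<and> rootin T (troot F) (tmax D) = rootin T (troot E) (tmax D)"
        using rootin_ext a(1) r(1) by blast
      show ?thesis
      proof (cases "D = F")
        case True
        have "tless T (troot D) (troot E)" using dcl_gt a r by blast
        moreover have "tless T (troot E) (troot F)" using dcl_gt[OF a(2) r2(1)] .
        ultimately show ?thesis using True tr_irrefl[OF T] Tlt by metis
      next
        case False
        then show ?thesis using q r a hl_II2 by auto
      qed
    qed
  qed
qed

lemma hl_trans: assumes xy: "hl x y" and yz: "hl y z" shows "hl x z"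
proof -
  have n: "x \<in> tnodes HT" "y \<in> tnodes HT" "z \<in> tnodes HT" using hl_nodes assms by blast+
  show ?thesis
  proof (rule node_cases[OF n(1)])
    assume x: "x \<in> sp"
    show ?thesis
    proof (rule node_cases[OF n(2)])
      assume y: "y \<in> sp"
      show ?thesis
      proof (rule node_cases[OF n(3)])
        assume z: "z \<in> sp" show ?thesis by (rule trans_SSS[OF x y z xy yz])
      next
        fix F assume F: "F \<in> \<Gamma>" and z: "z \<in> impl F" show ?thesis by (rule trans_SSI[OF F x y z xy yz])
      qed
    next
      fix E assume E: "E \<in> \<Gamma>" and y: "y \<in> impl E"
      show ?thesis
      proof (rule node_cases[OF n(3)])
        assume z: "z \<in> sp" show ?thesis by (rule trans_SIS[OF E x y z xy yz])
      next
        fix F assume F: "F \<in> \<Gamma>" and z: "z \<in> impl F" show ?thesis by (rule trans_SII[OF E F x y z xy yz])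
      qed
    qed
  next
    fix D assume D: "D \<in> \<Gamma>" and x: "x \<in> impl D"
    show ?thesis
    proof (rule node_cases[OF n(2)])
      assume y: "y \<in> sp"
      show ?thesis
      proof (rule node_cases[OF n(3)])
        assume z: "z \<in> sp" show ?thesis by (rule trans_ISS[OF D x y z xy yz])
      next
        fix F assume F: "F \<in> \<Gamma>" and z: "z \<in> impl F" show ?thesis by (rule trans_ISI[OF D F x y z xy yz])
      qed
    next
      fix E assume E: "E \<in> \<Gamma>" and y: "y \<in> impl E"
      show ?thesis
      proof (rule node_cases[OF n(3)])
        assume z: "z \<in> sp" show ?thesis by (rule trans_IIS[OF D E x y z xy yz])
      next
        fix F assume F: "F \<in> \<Gamma>" and z: "z \<in> impl F" show ?thesis by (rule trans_III[OF D E F x y z xy yz])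
      qed
    qed
  qed
qed


lemma lin_S_SI: "E \<in> \<Gamma> \<Longrightarrow> c \<in> sp \<Longrightarrow> a \<in> sp \<Longrightarrow> b \<in> impl E \<Longrightarrow> hl a c \<Longrightarrow> hl b c \<Longrightarrow> hl a b \<or> hl b a"
proof -
  assume A: "E \<in> \<Gamma>" "c \<in> sp" "a \<in> sp" "b \<in> impl E" "hl a c" "hl b c"
  have ac: "tless T a c" using hl_SS A by blast
  have bc: "c \<in> dcl T (tmax E)" "tless E b (rootin T c (tmax E))" using hl_IS A by blast+
  have Ec: "tless T (troot E) c" using dcl_gt A bc by blast
  from tr_lin[OF T ac Ec] show ?thesis
  proof (elim disjE)
    assume "a = troot E" then show ?thesis using hl_SI A tle_refl[OF T] g0T by metis
  next
    assume "tless T a (troot E)" then show ?thesis using hl_SI A Tle by blast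
  next
    assume Ea: "tless T (troot E) a"
    then have ad: "a \<in> dcl T (tmax E)" using supp_dcl A by blast
    have "rootin T c (tmax E) = rootin T a (tmax E)" using rootin_ext[OF A(1) ad] ac Tle by blast
    then show ?thesis using hl_IS A ad bc by auto
  qed
qed

lemma lin_S_II: "D \<in> \<Gamma> \<Longrightarrow> E \<in> \<Gamma> \<Longrightarrow> c \<in> sp \<Longrightarrow> a \<in> impl D \<Longrightarrow> b \<in> impl E \<Longrightarrow> hl a c \<Longrightarrow> hl b c \<Longrightarrow> a = b \<or> hl a b \<or> hl b a"
proof -
  assume A: "D \<in> \<Gamma>" "E \<in> \<Gamma>" "c \<in> sp" "a \<in> impl D" "b \<in> impl E" "hl a c" "hl b c"
  have ac: "c \<in> dcl T (tmax D)" "tless D a (rootin T c (tmax D))" using hl_IS A by blast+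
  have bc: "c \<in> dcl T (tmax E)" "tless E b (rootin T c (tmax E))" using hl_IS A by blast+
  show ?thesis
  proof (cases "D = E")
    case True
    then have "a = b \<or> tless D a b \<or> tless D b a" using tr_lin[OF g_tree[OF A(1)] ac(2)] bc by blast
    then show ?thesis using hl_II A True by blast
  next
    case False
    have Dc: "tless T (troot D) c" using dcl_gt A ac by blast
    have Ec: "tless T (troot E) c" using dcl_gt A bc by blast
    from cons[OF A(1,2) False] show ?thesis
    proof (elim conjE disjE)
      assume "incomp T (troot D) (troot E)"
      then show ?thesis using tr_lin[OF T Dc Ec] unfolding incomp_def tle_def by blast
    next
      assume d: "troot D \<in> dcl T (tmax E)"
      have "rootin T c (tmax E) = rootin T (troot D) (tmax E)" using rootin_ext[OF A(2) d] Dc Tle by blast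
      then show ?thesis using hl_II2[OF A(2,1) False[symmetric] A(5,4)] d bc by auto
    next
      assume d: "troot E \<in> dcl T (tmax D)"
      have "rootin T c (tmax D) = rootin T (troot E) (tmax D)" using rootin_ext[OF A(1) d] Ec Tle by blast
      then show ?thesis using hl_II2[OF A(1,2) False A(4,5)] d ac by auto
    qed
  qed
qed

lemma lin_I_SI: "E \<in> \<Gamma> \<Longrightarrow> F \<in> \<Gamma> \<Longrightarrow> c \<in> impl F \<Longrightarrow> a \<in> sp \<Longrightarrow> b \<in> impl E \<Longrightarrow> hl a c \<Longrightarrow> hl b c \<Longrightarrow> hl a b \<or> hl b a"
proof -
  assume A: "E \<in> \<Gamma>" "F \<in> \<Gamma>" "c \<in> impl F" "a \<in> sp" "b \<in> impl E" "hl a c" "hl b c"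
  have aF: "tle T a (troot F)" using hl_SI A by blast
  show ?thesis
  proof (cases "E = F")
    case True then show ?thesis using aF hl_SI A by blast
  next
    case False
    then have bF: "troot F \<in> dcl T (tmax E)" "tless E b (rootin T (troot F) (tmax E))" using hl_II2 A by blast+
    have Fs: "troot F \<in> sp" using root_supp A by blast
    have bF': "hl b (troot F)" using hl_IS[OF A(1,5) Fs] bF by blast
    from tle_cases[OF T aF] show ?thesis
    proof
      assume "a = troot F" then show ?thesis using bF' by blast
    next
      assume "tless T a (troot F)"
      then have "hl a (troot F)" using hl_SS A Fs by blast
      then show ?thesis using lin_S_SI[OF A(1) Fs A(4,5) _ bF'] by blast
    qed
  qed
qed

lemma lin_I_II: "D \<in> \<Gamma> \<Longrightarrow> E \<in> \<Gamma> \<Longrightarrow> F \<in> \<Gamma> \<Longrightarrow> c \<in> impl F \<Longrightarrow> a \<in> impl D \<Longrightarrow> b \<in> impl E \<Longrightarrow> hl a c \<Longrightarrow> hl b c \<Longrightarrow> a = b \<or> hl a b \<or> hl b a"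
proof -
  assume A: "D \<in> \<Gamma>" "E \<in> \<Gamma>" "F \<in> \<Gamma>" "c \<in> impl F" "a \<in> impl D" "b \<in> impl E" "hl a c" "hl b c"
  have Fs: "troot F \<in> sp" using root_supp A by blast
  show ?thesis
  proof (cases "D = F")
    case DF: True
    show ?thesis
    proof (cases "E = F")
      case True
      then have "tless F a c" "tless F b c" using hl_II A DF by blast+
      then have "a = b \<or> tless F a b \<or> tless F b a" using tr_lin[OF g_tree[OF A(3)]] by blast
      then show ?thesis using hl_II A DF True by blast
    next
      case False
      then have "troot F \<in> dcl T (tmax E)" "tless E b (rootin T (troot F) (tmax E))" using hl_II2 A by blast+
      then have "hl b a" using hl_II2[OF A(2,1)] A DF False by auto
      then show ?thesis by blast
    qed
  next
    case DF: False
    then have aF: "troot F \<in> dcl T (tmax D)" "tless D a (rootin T (troot F) (tmax D))" using hl_II2 A by blast+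
    show ?thesis
    proof (cases "E = F")
      case True
      then have "hl a b" using hl_II2[OF A(1,2)] A DF aF by auto
      then show ?thesis by blast
    next
      case False
      then have bF: "troot F \<in> dcl T (tmax E)" "tless E b (rootin T (troot F) (tmax E))" using hl_II2 A by blast+
      have "hl a (troot F)" "hl b (troot F)" using hl_IS A Fs aF bF by blast+
      then show ?thesis using lin_S_II[OF A(1,2) Fs A(5,6)] by blast
    qed
  qed
qed

lemma hl_lin: assumes ac: "hl a c" and bc: "hl b c" shows "a = b \<or> hl a b \<or> hl b a"
proof -
  have n: "a \<in> tnodes HT" "b \<in> tnodes HT" "c \<in> tnodes HT" using hl_nodes assms by blast+
  show ?thesis
  proof (rule node_cases[OF n(3)])
    assume c: "c \<in> sp"
    show ?thesis
    proof (rule node_cases[OF n(1)]; rule node_cases[OF n(2)])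
      assume "a \<in> sp" "b \<in> sp" then show ?thesis using hl_SS c ac bc tr_lin[OF T] by metis
    next
      fix E assume "a \<in> sp" "E \<in> \<Gamma>" "b \<in> impl E" then show ?thesis using lin_S_SI c ac bc by blast
    next
      fix E assume "b \<in> sp" "E \<in> \<Gamma>" "a \<in> impl E" then show ?thesis using lin_S_SI c ac bc by blast
    next
      fix D E assume "D \<in> \<Gamma>" "a \<in> impl D" "E \<in> \<Gamma>" "b \<in> impl E" then show ?thesis using lin_S_II c ac bc by blast
    qed
  next
    fix F assume F: "F \<in> \<Gamma>" and c: "c \<in> impl F"
    show ?thesis
    proof (rule node_cases[OF n(1)]; rule node_cases[OF n(2)])
      assume a: "a \<in> sp" and b: "b \<in> sp"
      have "tle T a (troot F)" "tle T b (troot F)" using hl_SI F a b c ac bc by blast+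
      then have "tle T a b \<or> tle T b a" using tle_lin[OF T] by blast
      then show ?thesis using hl_SS a b tle_cases[OF T] by metis
    next
      fix E assume "a \<in> sp" "E \<in> \<Gamma>" "b \<in> impl E" then show ?thesis using lin_I_SI F c ac bc by blast
    next
      fix E assume "b \<in> sp" "E \<in> \<Gamma>" "a \<in> impl E" then show ?thesis using lin_I_SI F c ac bc by blast
    next
      fix D E assume "D \<in> \<Gamma>" "a \<in> impl D" "E \<in> \<Gamma>" "b \<in> impl E" then show ?thesis using lin_I_II F c ac bc by blast
    qed
  qed
qed

lemma hl_irrefl: "\<not> hl x x"
proof
  assume a: "hl x x"
  then have "x \<in> tnodes HT" using hl_nodes by blast
  then show False
  proof (rule node_cases)
    assume "x \<in> sp" then show False using a hl_SS tr_irrefl[OF T] by blast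
  next
    fix g assume "g \<in> \<Gamma>" "x \<in> impl g" then show False using a hl_II tr_irrefl[OF g_tree] by blast
  qed
qed

lemma hl_asym: "hl x y \<Longrightarrow> \<not> hl y x" using hl_trans hl_irrefl by blast


subsection \<open>Sons in the hybrid\<close>

lemma son_g_cases: "g \<in> \<Gamma> \<Longrightarrow> x \<in> tnodes g \<Longrightarrow> s \<in> sons g x \<Longrightarrow> s \<in> impl g \<or> s \<in> tmax g"
proof -
  assume a: "g \<in> \<Gamma>" "x \<in> tnodes g" "s \<in> sons g x"
  have s: "s \<in> tnodes g" "tless g x s" using a(3) unfolding sons_def by blast+
  have "s \<noteq> troot g"
  proof
    assume "s = troot g"
    moreover have "tle g (troot g) x" using g0[OF a(1)] a(2) by blast
    ultimately show False using s(2) tle_less_trans[OF g_tree[OF a(1)]] tr_irrefl[OF g_tree[OF a(1)]] by metis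
  qed
  then show ?thesis using g_cases[OF s(1)] by blast
qed

lemma max_hl: "g \<in> \<Gamma> \<Longrightarrow> x \<in> impl g \<Longrightarrow> m \<in> tmax g \<Longrightarrow> hl x m \<longleftrightarrow> tless g x m"
proof -
  assume a: "g \<in> \<Gamma>" "x \<in> impl g" "m \<in> tmax g"
  have ms: "m \<in> sp" by (rule max_supp[OF a(1,3)])
  have mT: "m \<in> tnodes T" using gmax[OF a(1,3)] by blast
  have d: "m \<in> dcl T (tmax g)" using dcl_I[OF a(3) tle_refl[OF T mT]] .
  have r: "rootin T m (tmax g) = m" by (rule rootin_eq[OF a(1,3) tle_refl[OF T mT]])
  show ?thesis using hl_IS[OF a(1,2) ms] d r by simp
qed

lemma max_between_S: "g \<in> \<Gamma> \<Longrightarrow> m \<in> tmax g \<Longrightarrow> w \<in> sp \<Longrightarrow> tless T (troot g) w \<Longrightarrow> \<not> tless T w m"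
proof
  assume a: "g \<in> \<Gamma>" "m \<in> tmax g" "w \<in> sp" "tless T (troot g) w" "tless T w m"
  have wd: "w \<in> dcl T (tmax g)" by (rule supp_dcl[OF a(3,1,4)])
  have r: "rootin T w (tmax g) \<in> tmax g" "tle T (rootin T w (tmax g)) w" using rootin[OF a(1) wd] by blast+
  have "tless T (rootin T w (tmax g)) m" using r(2) a(5) tle_less_trans[OF T] by blast
  then have "rootin T w (tmax g) = m" using gmax_eq[OF a(1) r(1) a(2)] Tle by blast
  then show False using r(2) a(5) tle_less_trans[OF T] tr_irrefl[OF T] by metis
qed

lemma sons_I: assumes g: "g \<in> \<Gamma>" and x: "x \<in> impl g" shows "sons HT x = sons g x"
proof
  have gt: "is_tree g" by (rule g_tree[OF g])
  have x0: "tless g (troot g) x" by (rule root_less_impl[OF g x])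
  have xg: "x \<in> tnodes g" using impl_sub[OF x] by blast
  show "sons g x \<subseteq> sons HT x"
  proof
    fix s assume s: "s \<in> sons g x"
    have sx: "tless g x s" and nb: "\<And>z. tless g x z \<Longrightarrow> \<not> tless g z s" using s unfolding sons_def by blast+
    have sc: "s \<in> impl g \<or> s \<in> tmax g" by (rule son_g_cases[OF g xg s])
    have hxs: "hl x s"
      using sc
    proof
      assume si: "s \<in> impl g" then show ?thesis using hl_II[OF g x si] sx by blast
    next
      assume si: "s \<in> tmax g" then show ?thesis using max_hl[OF g x si] sx by blast
    qed
    have nw: "\<not> (hl x w \<and> hl w s)" for w
    proof
      assume w: "hl x w \<and> hl w s"
      have wn: "w \<in> tnodes HT" using hl_nodes w by blast
      show False
      proof (rule node_cases[OF wn])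
        assume ws: "w \<in> sp"
        have wd: "w \<in> dcl T (tmax g)" using hl_IS[OF g x ws] w by blast
        have gw: "tless T (troot g) w" by (rule dcl_gt[OF g wd])
        from sc show False
        proof
          assume si: "s \<in> impl g"
          have "tle T w (troot g)" using hl_SI[OF g ws si] w by blast
          then show False using gw tle_less_trans[OF T] tr_irrefl[OF T] by blast
        next
          assume sm: "s \<in> tmax g"
          have "tless T w s" using hl_SS[OF ws max_supp[OF g sm]] w by blast
          then show False using max_between_S[OF g sm ws gw] by blast
        qed
      next
        fix E assume E: "E \<in> \<Gamma>" and wE: "w \<in> impl E"
        show False
        proof (cases "E = g")
          case True
          then have wi: "w \<in> impl g" using wE by simp
          have xw: "tless g x w" using hl_II[OF g x wi] w by blast
          have "tless g w s"
            using sc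
          proof
            assume si: "s \<in> impl g" then show ?thesis using hl_II[OF g wi si] w by blast
          next
            assume si: "s \<in> tmax g" then show ?thesis using max_hl[OF g wi si] w by blast
          qed
          then show False using nb xw by blast
        next
          case False
          have d: "troot E \<in> dcl T (tmax g)" "tless g x (rootin T (troot E) (tmax g))"
            using hl_II2[OF g E False[symmetric] x wE] w by blast+
          have r: "rootin T (troot E) (tmax g) \<in> tmax g" "tle T (rootin T (troot E) (tmax g)) (troot E)"
            using rootin[OF g d(1)] by blast+
          have gE: "tless T (troot g) (troot E)" by (rule dcl_gt[OF g d(1)])
          from sc show False
          proof
            assume si: "s \<in> impl g"
            have "troot g \<in> dcl T (tmax E)" using hl_II2[OF E g False wE si] w by blast
            then have "tless T (troot E) (troot g)" by (rule dcl_gt[OF E])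
            then show False using gE tr_asym[OF T] by blast
          next
            assume sm: "s \<in> tmax g"
            have "s \<in> dcl T (tmax E)" using hl_IS[OF E wE max_supp[OF g sm]] w by blast
            then have Es: "tless T (troot E) s" by (rule dcl_gt[OF E])
            then have "tless T (rootin T (troot E) (tmax g)) s" using r(2) tle_less_trans[OF T] by blast
            then have "rootin T (troot E) (tmax g) = s" using gmax_eq[OF g r(1) sm] Tle by blast
            then show False using r(2) Es tle_less_trans[OF T] tr_irrefl[OF T] by metis
          qed
        qed
      qed
    qed
    have "s \<in> tnodes HT" using hl_nodes[OF hxs] by blast
    then show "s \<in> sons HT x" unfolding sons_def using hxs nw by blast
  qed
next
  have gt: "is_tree g" by (rule g_tree[OF g])
  have xg: "x \<in> tnodes g" using impl_sub[OF x] by blast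
  show "sons HT x \<subseteq> sons g x"
  proof
    fix s assume s: "s \<in> sons HT x"
    have hxs: "hl x s" and nb: "\<And>z. hl x z \<Longrightarrow> \<not> hl z s" and sn: "s \<in> tnodes HT" using s unfolding sons_def by blast+
    have sc: "(s \<in> impl g \<or> s \<in> tmax g) \<and> tless g x s"
    proof (rule node_cases[OF sn])
      assume ss: "s \<in> sp"
      have d: "s \<in> dcl T (tmax g)" "tless g x (rootin T s (tmax g))" using hl_IS[OF g x ss] hxs by blast+
      have r: "rootin T s (tmax g) \<in> tmax g" "tle T (rootin T s (tmax g)) s" using rootin[OF g d(1)] by blast+
      have "rootin T s (tmax g) = s"
      proof (rule ccontr)
        assume ne: "rootin T s (tmax g) \<noteq> s"
        then have lt: "tless T (rootin T s (tmax g)) s" using r(2) unfolding tle_def by blast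
        have "hl x (rootin T s (tmax g))" using max_hl[OF g x r(1)] d(2) by blast
        moreover have "hl (rootin T s (tmax g)) s" using hl_SS[OF max_supp[OF g r(1)] ss] lt by blast
        ultimately show False using nb by blast
      qed
      then show ?thesis using r d by simp
    next
      fix E assume E: "E \<in> \<Gamma>" and sE: "s \<in> impl E"
      show ?thesis
      proof (cases "E = g")
        case True
        then have "s \<in> impl g" using sE by simp
        then show ?thesis using hl_II[OF g x] hxs by blast
      next
        case False
        have d: "troot E \<in> dcl T (tmax g)" "tless g x (rootin T (troot E) (tmax g))"
          using hl_II2[OF g E False[symmetric] x sE] hxs by blast+
        have r: "rootin T (troot E) (tmax g) \<in> tmax g" "tle T (rootin T (troot E) (tmax g)) (troot E)"
          using rootin[OF g d(1)] by blast+
        have "hl x (rootin T (troot E) (tmax g))" using max_hl[OF g x r(1)] d(2) by blast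
        moreover have "hl (rootin T (troot E) (tmax g)) s" using hl_SI[OF E max_supp[OF g r(1)] sE] r(2) by blast
        ultimately show ?thesis using nb by blast
      qed
    qed
    have nbg: "\<not> (tless g x w \<and> tless g w s)" for w
    proof
      assume w: "tless g x w \<and> tless g w s"
      have wg: "w \<in> tnodes g" using tr_nodes[OF gt] w by blast
      have "w \<noteq> troot g" using w root_less_impl[OF g x] tr_asym[OF gt] by blast
      moreover have "w \<notin> tmax g" using w unfolding tmax_def by blast
      ultimately have wi: "w \<in> impl g" using g_cases[OF wg] by blast
      have "hl x w" using hl_II[OF g x wi] w by blast
      moreover have "hl w s"
        using sc
      proof (elim conjE disjE)
        assume si: "s \<in> impl g" then show ?thesis using hl_II[OF g wi si] w by blast
      next
        assume si: "s \<in> tmax g" then show ?thesis using max_hl[OF g wi si] w by blast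
      qed
      ultimately show False using nb by blast
    qed
    show "s \<in> sons g x" unfolding sons_def using sc nbg tr_nodes[OF gt] by blast
  qed
qed

lemma sons_root: assumes g: "g \<in> \<Gamma>" shows "sons HT (troot g) = sons g (troot g)"
proof
  have gt: "is_tree g" by (rule g_tree[OF g])
  have rs: "troot g \<in> sp" by (rule root_supp[OF g])
  have rT: "troot g \<in> tnodes T" by (rule g0T[OF g])
  have rg: "troot g \<in> tnodes g" using g0[OF g] by blast
  have rle: "tle T (troot g) (troot g)" by (rule tle_refl[OF T rT])
  show "sons g (troot g) \<subseteq> sons HT (troot g)"
  proof
    fix s assume s: "s \<in> sons g (troot g)"
    have sx: "tless g (troot g) s" and nb: "\<And>z. tless g (troot g) z \<Longrightarrow> \<not> tless g z s" using s unfolding sons_def by blast+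
    have sc: "s \<in> impl g \<or> s \<in> tmax g" by (rule son_g_cases[OF g rg s])
    have hxs: "hl (troot g) s"
      using sc
    proof
      assume si: "s \<in> impl g" then show ?thesis using hl_SI[OF g rs si] rle by blast
    next
      assume si: "s \<in> tmax g" then show ?thesis using hl_SS[OF rs max_supp[OF g si]] gmax[OF g si] by blast
    qed
    have nw: "\<not> (hl (troot g) w \<and> hl w s)" for w
    proof
      assume w: "hl (troot g) w \<and> hl w s"
      have wn: "w \<in> tnodes HT" using hl_nodes w by blast
      show False
      proof (rule node_cases[OF wn])
        assume ws: "w \<in> sp"
        have gw: "tless T (troot g) w" using hl_SS[OF rs ws] w by blast
        from sc show False
        proof
          assume si: "s \<in> impl g"
          have "tle T w (troot g)" using hl_SI[OF g ws si] w by blast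
          then show False using gw tle_less_trans[OF T] tr_irrefl[OF T] by blast
        next
          assume sm: "s \<in> tmax g"
          have "tless T w s" using hl_SS[OF ws max_supp[OF g sm]] w by blast
          then show False using max_between_S[OF g sm ws gw] by blast
        qed
      next
        fix E assume E: "E \<in> \<Gamma>" and wE: "w \<in> impl E"
        show False
        proof (cases "E = g")
          case True
          then have wi: "w \<in> impl g" using wE by simp
          have xw: "tless g (troot g) w" by (rule root_less_impl[OF g wi])
          have "tless g w s"
            using sc
          proof
            assume si: "s \<in> impl g" then show ?thesis using hl_II[OF g wi si] w by blast
          next
            assume si: "s \<in> tmax g" then show ?thesis using max_hl[OF g wi si] w by blast
          qed
          then show False using nb xw by blast
        next
          case False
          have "tle T (troot g) (troot E)" using hl_SI[OF E rs wE] w by blast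
          moreover have "troot g \<noteq> troot E" using roots_distinct[OF g E] False by blast
          ultimately have gE: "tless T (troot g) (troot E)" unfolding tle_def by blast
          have d: "troot E \<in> dcl T (tmax g)" by (rule supp_dcl[OF root_supp[OF E] g gE])
          have r: "rootin T (troot E) (tmax g) \<in> tmax g" "tle T (rootin T (troot E) (tmax g)) (troot E)"
            using rootin[OF g d] by blast+
          from sc show False
          proof
            assume si: "s \<in> impl g"
            have "troot g \<in> dcl T (tmax E)" using hl_II2[OF E g False wE si] w by blast
            then have "tless T (troot E) (troot g)" by (rule dcl_gt[OF E])
            then show False using gE tr_asym[OF T] by blast
          next
            assume sm: "s \<in> tmax g"
            have "s \<in> dcl T (tmax E)" using hl_IS[OF E wE max_supp[OF g sm]] w by blast
            then have Es: "tless T (troot E) s" by (rule dcl_gt[OF E])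
            then have "tless T (rootin T (troot E) (tmax g)) s" using r(2) tle_less_trans[OF T] by blast
            then have "rootin T (troot E) (tmax g) = s" using gmax_eq[OF g r(1) sm] Tle by blast
            then show False using r(2) Es tle_less_trans[OF T] tr_irrefl[OF T] by metis
          qed
        qed
      qed
    qed
    have "s \<in> tnodes HT" using hl_nodes[OF hxs] by blast
    then show "s \<in> sons HT (troot g)" unfolding sons_def using hxs nw by blast
  qed
next
  have gt: "is_tree g" by (rule g_tree[OF g])
  have rs: "troot g \<in> sp" by (rule root_supp[OF g])
  have rT: "troot g \<in> tnodes T" by (rule g0T[OF g])
  have rle: "tle T (troot g) (troot g)" by (rule tle_refl[OF T rT])
  show "sons HT (troot g) \<subseteq> sons g (troot g)"
  proof
    fix s assume s: "s \<in> sons HT (troot g)"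
    have hxs: "hl (troot g) s" and nb: "\<And>z. hl (troot g) z \<Longrightarrow> \<not> hl z s" and sn: "s \<in> tnodes HT"
      using s unfolding sons_def by blast+
    have sc: "(s \<in> impl g \<or> s \<in> tmax g) \<and> tless g (troot g) s"
    proof (rule node_cases[OF sn])
      assume ss: "s \<in> sp"
      have gs: "tless T (troot g) s" using hl_SS[OF rs ss] hxs by blast
      have d: "s \<in> dcl T (tmax g)" by (rule supp_dcl[OF ss g gs])
      have r: "rootin T s (tmax g) \<in> tmax g" "tle T (rootin T s (tmax g)) s" using rootin[OF g d] by blast+
      have "rootin T s (tmax g) = s"
      proof (rule ccontr)
        assume ne: "rootin T s (tmax g) \<noteq> s"
        then have lt: "tless T (rootin T s (tmax g)) s" using r(2) unfolding tle_def by blast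
        have "hl (troot g) (rootin T s (tmax g))" using hl_SS[OF rs max_supp[OF g r(1)]] gmax[OF g r(1)] by blast
        moreover have "hl (rootin T s (tmax g)) s" using hl_SS[OF max_supp[OF g r(1)] ss] lt by blast
        ultimately show False using nb by blast
      qed
      then have "s \<in> tmax g" using r by simp
      then show ?thesis using root_less_max[OF g] by blast
    next
      fix E assume E: "E \<in> \<Gamma>" and sE: "s \<in> impl E"
      show ?thesis
      proof (cases "E = g")
        case True
        then have si: "s \<in> impl g" using sE by simp
        then show ?thesis using root_less_impl[OF g si] by blast
      next
        case False
        have "tle T (troot g) (troot E)" using hl_SI[OF E rs sE] hxs by blast
        moreover have "troot g \<noteq> troot E" using roots_distinct[OF g E] False by blast
        ultimately have gE: "tless T (troot g) (troot E)" unfolding tle_def by blast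
        have Es: "troot E \<in> sp" by (rule root_supp[OF E])
        have "hl (troot g) (troot E)" using hl_SS[OF rs Es] gE by blast
        moreover have "hl (troot E) s" using hl_SI[OF E Es sE] tle_refl[OF T g0T[OF E]] by blast
        ultimately show ?thesis using nb by blast
      qed
    qed
    have nbg: "\<not> (tless g (troot g) w \<and> tless g w s)" for w
    proof
      assume w: "tless g (troot g) w \<and> tless g w s"
      have wg: "w \<in> tnodes g" using tr_nodes[OF gt] w by blast
      have "w \<noteq> troot g" using w tr_irrefl[OF gt] by blast
      moreover have "w \<notin> tmax g" using w unfolding tmax_def by blast
      ultimately have wi: "w \<in> impl g" using g_cases[OF wg] by blast
      have "hl (troot g) w" using hl_SI[OF g rs wi] rle by blast
      moreover have "hl w s"
        using sc
      proof (elim conjE disjE)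
        assume si: "s \<in> impl g" then show ?thesis using hl_II[OF g wi si] w by blast
      next
        assume si: "s \<in> tmax g" then show ?thesis using max_hl[OF g wi si] w by blast
      qed
      ultimately show False using nb by blast
    qed
    show "s \<in> sons g (troot g)" unfolding sons_def using sc nbg tr_nodes[OF gt] by blast
  qed
qed

lemma sonT_supp: assumes x: "x \<in> sp" and nr: "\<forall>g\<in>\<Gamma>. x \<noteq> troot g" and s: "s \<in> sons T x"
  shows "s \<in> sp"
  unfolding supp_iff
proof (intro conjI ballI impI)
  have xs: "tless T x s" and nb: "\<And>z. tless T x z \<Longrightarrow> \<not> tless T z s" and sT: "s \<in> tnodes T"
    using s unfolding sons_def by blast+
  show "s \<in> tnodes T" by (rule sT)
  fix E assume E: "E \<in> \<Gamma>" and Es: "tless T (troot E) s"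
  from tr_lin[OF T xs Es] show "s \<in> dcl T (tmax E)"
  proof (elim disjE)
    assume "x = troot E" then show ?thesis using nr E by blast
  next
    assume "tless T x (troot E)" then show ?thesis using nb Es by blast
  next
    assume Ex: "tless T (troot E) x"
    have xd: "x \<in> dcl T (tmax E)" by (rule supp_dcl[OF x E Ex])
    show ?thesis using rootin_ext[OF E xd Tle[OF xs]] by blast
  qed
qed

lemma sons_S: assumes x: "x \<in> sp" and nr: "\<forall>g\<in>\<Gamma>. x \<noteq> troot g"
  shows "sons HT x = sons T x"
proof
  show "sons T x \<subseteq> sons HT x"
  proof
    fix s assume s: "s \<in> sons T x"
    have xs: "tless T x s" and nb: "\<And>z. tless T x z \<Longrightarrow> \<not> tless T z s"
      using s unfolding sons_def by blast+
    have ss: "s \<in> sp" by (rule sonT_supp[OF x nr s])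
    have hxs: "hl x s" using hl_SS[OF x ss] xs by blast
    have nw: "\<not> (hl x w \<and> hl w s)" for w
    proof
      assume w: "hl x w \<and> hl w s"
      have wn: "w \<in> tnodes HT" using hl_nodes w by blast
      show False
      proof (rule node_cases[OF wn])
        assume ws: "w \<in> sp"
        have "tless T x w" "tless T w s" using hl_SS[OF x ws] hl_SS[OF ws ss] w by blast+
        then show False using nb by blast
      next
        fix E assume E: "E \<in> \<Gamma>" and wE: "w \<in> impl E"
        have "tle T x (troot E)" using hl_SI[OF E x wE] w by blast
        then have xE: "tless T x (troot E)" using nr E unfolding tle_def by blast
        have "s \<in> dcl T (tmax E)" using hl_IS[OF E wE ss] w by blast
        then have "tless T (troot E) s" by (rule dcl_gt[OF E])
        then show False using nb xE by blast
      qed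
    qed
    have "s \<in> tnodes HT" using hl_nodes[OF hxs] by blast
    then show "s \<in> sons HT x" unfolding sons_def using hxs nw by blast
  qed
next
  show "sons HT x \<subseteq> sons T x"
  proof
    fix s assume s: "s \<in> sons HT x"
    have hxs: "hl x s" and nb: "\<And>z. hl x z \<Longrightarrow> \<not> hl z s" and sn: "s \<in> tnodes HT"
      using s unfolding sons_def by blast+
    have ss: "s \<in> sp"
    proof (rule node_cases[OF sn])
      fix E assume E: "E \<in> \<Gamma>" and sE: "s \<in> impl E"
      have "tle T x (troot E)" using hl_SI[OF E x sE] hxs by blast
      then have xE: "tless T x (troot E)" using nr E unfolding tle_def by blast
      have Es: "troot E \<in> sp" by (rule root_supp[OF E])
      have "hl x (troot E)" using hl_SS[OF x Es] xE by blast
      moreover have "hl (troot E) s" using hl_SI[OF E Es sE] tle_refl[OF T g0T[OF E]] by blast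
      ultimately show ?thesis using nb by blast
    qed
    have xs: "tless T x s" using hl_SS[OF x ss] hxs by blast
    have nbT: "\<not> (tless T x w \<and> tless T w s)" for w
    proof
      assume w: "tless T x w \<and> tless T w s"
      have wT: "w \<in> tnodes T" using tr_nodes[OF T] w by blast
      show False
      proof (cases "w \<in> sp")
        case True
        then show False using hl_SS[OF x True] hl_SS[OF True ss] w nb by blast
      next
        case False
        then obtain E where E: "E \<in> \<Gamma>" and Ew: "tless T (troot E) w" and nd: "w \<notin> dcl T (tmax E)"
          using wT unfolding supp_iff by blast
        have xw: "tless T x w" using w by blast
        have lin: "x = troot E \<or> tless T x (troot E) \<or> tless T (troot E) x" using tr_lin[OF T xw Ew] by blast
        from lin show False
        proof (elim disjE)
          assume "x = troot E" then show False using nr E by blast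
        next
          assume Ex: "tless T (troot E) x"
          have xd: "x \<in> dcl T (tmax E)" by (rule supp_dcl[OF x E Ex])
          show False using rootin_ext[OF E xd Tle[OF xw]] nd by blast
        next
          assume xE: "tless T x (troot E)"
          have Es: "troot E \<in> sp" by (rule root_supp[OF E])
          have "hl x (troot E)" using hl_SS[OF x Es] xE by blast
          moreover have "hl (troot E) s" using hl_SS[OF Es ss] Ew w tr_trans[OF T] by blast
          ultimately show False using nb by blast
        qed
      qed
    qed
    show "s \<in> sons T x" unfolding sons_def using xs nbT tr_nodes[OF T] by blast
  qed
qed

lemma nonmax_S: assumes x: "x \<in> sp" and nr: "\<forall>g\<in>\<Gamma>. x \<noteq> troot g" and nm: "x \<notin> tmax HT"
  shows "x \<notin> tmax T"
proof -
  have "x \<in> tnodes HT" using H_nodes x by blast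
  then obtain y where y: "hl x y" using nm unfolding tmax_def by blast
  have yn: "y \<in> tnodes HT" using hl_nodes[OF y] by blast
  have "\<exists>z. tless T x z"
  proof (rule node_cases[OF yn])
    assume ys: "y \<in> sp" then show ?thesis using hl_SS[OF x ys] y by blast
  next
    fix E assume E: "E \<in> \<Gamma>" and yE: "y \<in> impl E"
    have "tle T x (troot E)" using hl_SI[OF E x yE] y by blast
    then show ?thesis using nr E unfolding tle_def by blast
  qed
  then show ?thesis unfolding tmax_def by blast
qed

subsection \<open>Branches of the hybrid\<close>

lemma tleH: "tle HT x y \<longleftrightarrow> hl x y \<or> (x = y \<and> x \<in> tnodes HT)" unfolding tle_def by simp

lemma br_chain: "is_branch HT B \<Longrightarrow> a \<in> B \<Longrightarrow> b \<in> B \<Longrightarrow> a = b \<or> hl a b \<or> hl b a"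
  unfolding is_branch_def is_chain_def tle_def by blast

lemma br_nodes: "is_branch HT B \<Longrightarrow> a \<in> B \<Longrightarrow> a \<in> tnodes HT"
  unfolding is_branch_def is_chain_def by blast

lemma br_insert: assumes B: "is_branch HT B" and a: "a \<in> tnodes HT"
  and c: "\<And>b. b \<in> B \<Longrightarrow> a = b \<or> hl a b \<or> hl b a" shows "a \<in> B"
proof -
  have "is_chain HT (insert a B)"
    using B a c unfolding is_branch_def is_chain_def tle_def by blast
  then have "insert a B = B" using B unfolding is_branch_def by blast
  then show ?thesis by blast
qed

lemma br_down: assumes B: "is_branch HT B" and c: "c \<in> B" and ac: "hl a c" shows "a \<in> B"
proof (rule br_insert[OF B])
  show "a \<in> tnodes HT" using hl_nodes[OF ac] by blast
  fix b assume b: "b \<in> B"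
  from br_chain[OF B b c] show "a = b \<or> hl a b \<or> hl b a"
  proof (elim disjE)
    assume "b = c" then show ?thesis using ac by blast
  next
    assume "hl b c" then show ?thesis using hl_lin[OF ac] by blast
  next
    assume "hl c b" then show ?thesis using hl_trans[OF ac] by blast
  qed
qed

lemma K1: assumes bc: "\<forall>g\<in>\<Gamma>. bounded_chains g" and B: "is_branch HT B" and g: "g \<in> \<Gamma>"
  and r: "troot g \<in> B" shows "\<exists>m \<in> B. m \<in> tmax g"
proof (rule ccontr)
  assume nm: "\<not> (\<exists>m \<in> B. m \<in> tmax g)"
  have gt: "is_tree g" by (rule g_tree[OF g])
  let ?C = "{w \<in> B. w = troot g \<or> w \<in> impl g}"
  have rs: "troot g \<in> sp" by (rule root_supp[OF g])
  have Cch: "is_chain g ?C"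
    unfolding is_chain_def
  proof (intro conjI ballI)
    show "?C \<subseteq> tnodes g" using g0[OF g] unfolding impl_def by blast
    fix a b assume a: "a \<in> ?C" and b: "b \<in> ?C"
    have nd: "a \<in> tnodes g" "b \<in> tnodes g" using a b g0[OF g] unfolding impl_def by blast+
    show "tle g a b \<or> tle g b a"
    proof (cases "a = troot g")
      case True then show ?thesis using g0[OF g] nd by blast
    next
      case aF: False
      then have ai: "a \<in> impl g" using a by blast
      show ?thesis
      proof (cases "b = troot g")
        case True then show ?thesis using g0[OF g] nd by blast
      next
        case False
        then have bi: "b \<in> impl g" using b by blast
        have "a = b \<or> hl a b \<or> hl b a" using br_chain[OF B] a b by blast
        then show ?thesis using hl_II[OF g ai bi] hl_II[OF g bi ai] nd unfolding tle_def by blast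
      qed
    qed
  qed
  have "?C \<noteq> {}" using r by blast
  then obtain u where u: "u \<in> tnodes g" "\<forall>c \<in> ?C. tle g c u"
    using bc g Cch unfolding bounded_chains_def by blast
  obtain m where m: "m \<in> tmax g" "tle g u m" using chain_upper_max[OF gt _ u(1)] bc g by blast
  have ms: "m \<in> sp" by (rule max_supp[OF g m(1)])
  have rm: "hl (troot g) m" using hl_SS[OF rs ms] gmax[OF g m(1)] by blast
  have "m \<in> B"
  proof (rule br_insert[OF B])
    show "m \<in> tnodes HT" using ms H_nodes by blast
    fix w assume w: "w \<in> B"
    from br_chain[OF B w r] show "m = w \<or> hl m w \<or> hl w m"
    proof (elim disjE)
      assume "w = troot g" then show ?thesis using rm by blast
    next
      assume "hl w (troot g)" then show ?thesis using hl_trans[OF _ rm] by blast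
    next
      assume rw: "hl (troot g) w"
      have wn: "w \<in> tnodes HT" by (rule br_nodes[OF B w])
      show ?thesis
      proof (rule node_cases[OF wn])
        assume ws: "w \<in> sp"
        have gw: "tless T (troot g) w" using hl_SS[OF rs ws] rw by blast
        have wd: "w \<in> dcl T (tmax g)" by (rule supp_dcl[OF ws g gw])
        have rr: "rootin T w (tmax g) \<in> tmax g" "tle T (rootin T w (tmax g)) w" using rootin[OF g wd] by blast+
        show ?thesis
        proof (cases "rootin T w (tmax g) = w")
          case True then show ?thesis using nm w rr by auto
        next
          case False
          then have "tless T (rootin T w (tmax g)) w" using rr(2) unfolding tle_def by blast
          then have "hl (rootin T w (tmax g)) w" using hl_SS[OF max_supp[OF g rr(1)] ws] by blast
          then have "rootin T w (tmax g) \<in> B" by (rule br_down[OF B w])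
          then show ?thesis using nm rr by blast
        qed
      next
        fix E assume E: "E \<in> \<Gamma>" and wE: "w \<in> impl E"
        show ?thesis
        proof (cases "E = g")
          case True
          then have wi: "w \<in> impl g" using wE by simp
          then have "w \<in> ?C" using w by blast
          then have "tle g w u" using u by blast
          then have "tle g w m" using m(2) tle_trans[OF gt] by blast
          moreover have "w \<noteq> m" using wi m(1) unfolding impl_def by blast
          ultimately have "tless g w m" unfolding tle_def by blast
          then show ?thesis using max_hl[OF g wi m(1)] by blast
        next
          case False
          have "tle T (troot g) (troot E)" using hl_SI[OF E rs wE] rw by blast
          moreover have "troot g \<noteq> troot E" using roots_distinct[OF g E] False by blast
          ultimately have gE: "tless T (troot g) (troot E)" unfolding tle_def by blast
          have d: "troot E \<in> dcl T (tmax g)" by (rule supp_dcl[OF root_supp[OF E] g gE])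
          have rr: "rootin T (troot E) (tmax g) \<in> tmax g" "tle T (rootin T (troot E) (tmax g)) (troot E)"
            using rootin[OF g d] by blast+
          have "hl (rootin T (troot E) (tmax g)) w" using hl_SI[OF E max_supp[OF g rr(1)] wE] rr(2) by blast
          then have "rootin T (troot E) (tmax g) \<in> B" by (rule br_down[OF B w])
          then show ?thesis using nm rr by blast
        qed
      qed
    qed
  qed
  then show False using nm m by blast
qed

lemma K3: assumes bc: "\<forall>g\<in>\<Gamma>. bounded_chains g" and B: "is_branch HT B" and g: "g \<in> \<Gamma>"
  and x: "x \<in> B" "x \<in> impl g" shows "\<exists>m \<in> B. m \<in> tmax g \<and> tless g x m"
proof -
  have rs: "troot g \<in> sp" by (rule root_supp[OF g])
  have "hl (troot g) x" using hl_SI[OF g rs x(2)] tle_refl[OF T g0T[OF g]] by blast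
  then have "troot g \<in> B" by (rule br_down[OF B x(1)])
  then obtain m where m: "m \<in> B" "m \<in> tmax g" using K1[OF bc B g] by blast
  have ms: "m \<in> sp" by (rule max_supp[OF g m(2)])
  have "x \<noteq> m" using x(2) m(2) unfolding impl_def by blast
  moreover have "\<not> hl m x"
  proof
    assume "hl m x"
    then have "tle T m (troot g)" using hl_SI[OF g ms x(2)] by blast
    then show False using gmax[OF g m(2)] tle_less_trans[OF T] tr_irrefl[OF T] by blast
  qed
  ultimately have "hl x m" using br_chain[OF B x(1) m(1)] by blast
  then show ?thesis using max_hl[OF g x(2) m(2)] m by blast
qed

definition "proj B = {t \<in> tnodes T. \<exists>b \<in> B \<inter> sp. tle T t b}"

lemma proj_sp: "b \<in> B \<Longrightarrow> b \<in> sp \<Longrightarrow> b \<in> proj B"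
  unfolding proj_def using tle_refl[OF T] supp_T by blast

lemma K2: assumes bc: "\<forall>g\<in>\<Gamma>. bounded_chains g" and B: "is_branch HT B"
  shows "is_branch T (proj B)"
proof -
  have ch: "is_chain T (proj B)"
    unfolding is_chain_def
  proof (intro conjI ballI)
    show "proj B \<subseteq> tnodes T" unfolding proj_def by blast
    fix t1 t2 assume t1: "t1 \<in> proj B" and t2: "t2 \<in> proj B"
    obtain b1 where b1: "b1 \<in> B" "b1 \<in> sp" "tle T t1 b1" using t1 unfolding proj_def by blast
    obtain b2 where b2: "b2 \<in> B" "b2 \<in> sp" "tle T t2 b2" using t2 unfolding proj_def by blast
    have "b1 = b2 \<or> tless T b1 b2 \<or> tless T b2 b1"
      using br_chain[OF B b1(1) b2(1)] hl_SS[OF b1(2) b2(2)] hl_SS[OF b2(2) b1(2)] by blast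
    then show "tle T t1 t2 \<or> tle T t2 t1"
    proof (elim disjE)
      assume "b1 = b2" then show ?thesis using tle_lin[OF T] b1 b2 by blast
    next
      assume "tless T b1 b2"
      then have "tle T t1 b2" using b1(3) Tle tle_trans[OF T] by blast
      then show ?thesis using tle_lin[OF T] b2(3) by blast
    next
      assume "tless T b2 b1"
      then have "tle T t2 b1" using b2(3) Tle tle_trans[OF T] by blast
      then show ?thesis using tle_lin[OF T] b1(3) by blast
    qed
  qed
  have mx: "t \<in> proj B" if C: "is_chain T C" "proj B \<subseteq> C" and tC: "t \<in> C" for C t
  proof (rule ccontr)
    assume tn: "t \<notin> proj B"
    have tT: "t \<in> tnodes T" using C tC unfolding is_chain_def by blast
    have bt: "tless T b t" if b: "b \<in> B" "b \<in> sp" for b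
    proof -
      have "b \<in> C" using proj_sp[OF b] C by blast
      then have "tle T t b \<or> tle T b t" using C tC unfolding is_chain_def by blast
      moreover have "\<not> tle T t b" using tn b tT unfolding proj_def by blast
      ultimately have "tle T b t" by blast
      then show ?thesis using \<open>\<not> tle T t b\<close> unfolding tle_def by blast
    qed
    show False
    proof (cases "t \<in> sp")
      case True
      have "t \<in> B"
      proof (rule br_insert[OF B])
        show "t \<in> tnodes HT" using True H_nodes by blast
        fix w assume w: "w \<in> B"
        have wn: "w \<in> tnodes HT" by (rule br_nodes[OF B w])
        show "t = w \<or> hl t w \<or> hl w t"
        proof (rule node_cases[OF wn])
          assume ws: "w \<in> sp" then show ?thesis using hl_SS[OF ws True] bt w by blast
        next
          fix E assume E: "E \<in> \<Gamma>" and wE: "w \<in> impl E"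
          obtain m where m: "m \<in> B" "m \<in> tmax E" "tless E w m" using K3[OF bc B E w wE] by blast
          have ms: "m \<in> sp" by (rule max_supp[OF E m(2)])
          have mt: "tle T m t" using bt[OF m(1) ms] Tle by blast
          have "t \<in> dcl T (tmax E)" by (rule dcl_I[OF m(2) mt])
          moreover have "rootin T t (tmax E) = m" by (rule rootin_eq[OF E m(2) mt])
          ultimately have "hl w t" using hl_IS[OF E wE True] m(3) by simp
          then show ?thesis by blast
        qed
      qed
      then show False using tn proj_sp True by blast
    next
      case False
      then obtain E where E: "E \<in> \<Gamma>" and Et: "tless T (troot E) t" and nd: "t \<notin> dcl T (tmax E)"
        using tT unfolding supp_iff by blast
      show False
      proof (cases "\<exists>b \<in> B \<inter> sp. tle T (troot E) b")
        case True
        then obtain b where b: "b \<in> B" "b \<in> sp" "tle T (troot E) b" by blast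
        show False
        proof (cases "troot E = b")
          case True
          then have "troot E \<in> B" using b by simp
          then obtain m where m: "m \<in> B" "m \<in> tmax E" using K1[OF bc B E] by blast
          have "tless T m t" by (rule bt[OF m(1) max_supp[OF E m(2)]])
          then have "t \<in> dcl T (tmax E)" using dcl_I[OF m(2)] Tle by blast
          then show False using nd by blast
        next
          case False
          then have Eb: "tless T (troot E) b" using b(3) unfolding tle_def by blast
          have bd: "b \<in> dcl T (tmax E)" by (rule supp_dcl[OF b(2) E Eb])
          have "t \<in> dcl T (tmax E)" using rootin_ext[OF E bd Tle[OF bt[OF b(1,2)]]] by blast
          then show False using nd by blast
        qed
      next
        case False
        have below: "tless T b (troot E)" if b: "b \<in> B" "b \<in> sp" for b
        proof -
          have "b = troot E \<or> tless T b (troot E) \<or> tless T (troot E) b" using tr_lin[OF T bt[OF b] Et] by blast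
          then show ?thesis using False b tle_refl[OF T supp_T[OF b(2)]] Tle by blast
        qed
        have Es: "troot E \<in> sp" by (rule root_supp[OF E])
        have "troot E \<in> B"
        proof (rule br_insert[OF B])
          show "troot E \<in> tnodes HT" using Es H_nodes by blast
          fix w assume w: "w \<in> B"
          have wn: "w \<in> tnodes HT" by (rule br_nodes[OF B w])
          show "troot E = w \<or> hl (troot E) w \<or> hl w (troot E)"
          proof (rule node_cases[OF wn])
            assume ws: "w \<in> sp" then show ?thesis using hl_SS[OF ws Es] below w by blast
          next
            fix D assume D: "D \<in> \<Gamma>" and wD: "w \<in> impl D"
            obtain m where m: "m \<in> B" "m \<in> tmax D" "tless D w m" using K3[OF bc B D w wD] by blast
            have mt: "tle T m (troot E)" using below[OF m(1) max_supp[OF D m(2)]] Tle by blast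
            have "troot E \<in> dcl T (tmax D)" by (rule dcl_I[OF m(2) mt])
            moreover have "rootin T (troot E) (tmax D) = m" by (rule rootin_eq[OF D m(2) mt])
            ultimately have "hl w (troot E)" using hl_IS[OF D wD Es] m(3) by simp
            then show ?thesis by blast
          qed
        qed
        then show False using below[OF _ Es] tr_irrefl[OF T] by blast
      qed
    qed
  qed
  show ?thesis unfolding is_branch_def
  proof (intro conjI allI impI)
    show "is_chain T (proj B)" by (rule ch)
    fix C assume "is_chain T C" "proj B \<subseteq> C"
    then show "C = proj B" using mx by blast
  qed
qed

end

section \<open>Foliage level\<close>

locale FH =
  fixes F :: "('n, 'a) ftree" and \<phi> :: "('n, 'a) ftree set"
  assumes ft: "foliage_tree F" and ni: "nonincreasing F" and cf: "consistent_fgrafts F \<phi>"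
begin

abbreviation "T \<equiv> skel F"
abbreviation "\<Gamma> \<equiv> skel ` \<phi>"
abbreviation "L \<equiv> loss F \<phi>"
abbreviation "H \<equiv> fhybr F \<phi>"

lemma Ttree: "is_tree T" using ft unfolding foliage_tree_def .

sublocale SK T \<Gamma>
  by unfold_locales (use Ttree cf in \<open>auto simp: consistent_fgrafts_def\<close>)

lemma fg: "G \<in> \<phi> \<Longrightarrow> foliage_graft F G" using cf unfolding consistent_fgrafts_def by blast
lemma inj: "G \<in> \<phi> \<Longrightarrow> G' \<in> \<phi> \<Longrightarrow> skel G = skel G' \<Longrightarrow> G = G'"
  using cf unfolding consistent_fgrafts_def inj_on_def by blast
lemma G_ni: "G \<in> \<phi> \<Longrightarrow> tle (skel G) x y \<Longrightarrow> leaf G y \<subseteq> leaf G x"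
  using fg unfolding foliage_graft_def nonincreasing_def by blast
lemma G0: "G \<in> \<phi> \<Longrightarrow> leaf G (troot (skel G)) \<subseteq> leaf F (troot (skel G))"
  using fg unfolding foliage_graft_def by blast
lemma Gmax: "G \<in> \<phi> \<Longrightarrow> m \<in> tmax (skel G) \<Longrightarrow> leaf G m = leaf F m"
  using fg unfolding foliage_graft_def by blast
lemma F_ni: "tle T x y \<Longrightarrow> leaf F y \<subseteq> leaf F x"
  using ni unfolding nonincreasing_def by blast
lemma GinG: "G \<in> \<phi> \<Longrightarrow> skel G \<in> \<Gamma>" by blast
lemma G_sub0: "G \<in> \<phi> \<Longrightarrow> x \<in> tnodes (skel G) \<Longrightarrow> leaf G x \<subseteq> leaf F (troot (skel G))"
  using G_ni G0 g0 GinG by blast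
lemma cut_L: "G \<in> \<phi> \<Longrightarrow> leaf F (troot (skel G)) - L = leaf G (troot (skel G)) - L"
  using G0 unfolding loss_def cut_def by blast

lemma skelH: "skel H = HT" unfolding fhybr_def by simp

lemma leafH_S: "x \<in> sp \<Longrightarrow> leaf H x = leaf F x - L"
  unfolding fhybr_def fsupp_def by simp

lemma leafH_I: assumes G: "G \<in> \<phi>" and x: "x \<in> impl (skel G)" shows "leaf H x = leaf G x - L"
proof -
  have xs: "x \<notin> sp" using impl_notsp[OF GinG[OF G] x] .
  have "(SOME G'. G' \<in> \<phi> \<and> x \<in> impl (skel G')) = G"
  proof (rule some_equality)
    show "G \<in> \<phi> \<and> x \<in> impl (skel G)" using G x by blast
    fix G' assume "G' \<in> \<phi> \<and> x \<in> impl (skel G')"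
    then show "G' = G" using impl_unique[of "skel G'" "skel G"] G x inj by blast
  qed
  then show ?thesis using xs unfolding fhybr_def fsupp_def by simp
qed

lemma nodeF_cases: "x \<in> tnodes HT \<Longrightarrow> (x \<in> sp \<Longrightarrow> P) \<Longrightarrow> (\<And>G. G \<in> \<phi> \<Longrightarrow> x \<in> impl (skel G) \<Longrightarrow> P) \<Longrightarrow> P"
  using H_nodes by blast

lemma Gtree: "G \<in> \<phi> \<Longrightarrow> is_tree (skel G)" by (rule g_tree[OF GinG])

lemma impl_nodesG: "x \<in> impl (skel G) \<Longrightarrow> x \<in> tnodes (skel G)" unfolding impl_def by blast

lemma max_incomp: "G \<in> \<phi> \<Longrightarrow> y \<in> impl (skel G) \<Longrightarrow> m \<in> tmax (skel G) \<Longrightarrow> \<not> tless (skel G) y m \<Longrightarrow> incomp (skel G) y m"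
proof -
  assume a: "G \<in> \<phi>" "y \<in> impl (skel G)" "m \<in> tmax (skel G)" "\<not> tless (skel G) y m"
  have "y \<in> tnodes (skel G)" "y \<noteq> m" using impl_sub[OF a(2)] a(3) by auto
  moreover have "m \<in> tnodes (skel G)" "\<not> tless (skel G) m y" using max_nodes[OF a(3)] by auto
  ultimately show ?thesis using a(4) unfolding incomp_def tle_def by blast
qed

lemma ni_less: assumes "hl x y" shows "leaf H y \<subseteq> leaf H x"
proof -
  have n: "x \<in> tnodes HT" "y \<in> tnodes HT" using hl_nodes assms by blast+
  show ?thesis
  proof (rule nodeF_cases[OF n(1)]; rule nodeF_cases[OF n(2)])
    assume x: "x \<in> sp" and y: "y \<in> sp"
    have "tless T x y" using hl_SS x y assms by blast
    then have "leaf F y \<subseteq> leaf F x" by (rule F_ni[OF Tle])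
    then show ?thesis using leafH_S x y by blast
  next
    fix E assume x: "x \<in> sp" and E: "E \<in> \<phi>" "y \<in> impl (skel E)"
    have "tle T x (troot (skel E))" using hl_SI[OF GinG[OF E(1)] x E(2)] assms by blast
    then have "leaf F (troot (skel E)) \<subseteq> leaf F x" by (rule F_ni)
    moreover have "leaf E y \<subseteq> leaf F (troot (skel E))" by (rule G_sub0[OF E(1) impl_nodesG[OF E(2)]])
    ultimately show ?thesis using leafH_S[OF x] leafH_I[OF E] by blast
  next
    fix D assume y: "y \<in> sp" and D: "D \<in> \<phi>" "x \<in> impl (skel D)"
    have d: "y \<in> dcl T (tmax (skel D))" "tless (skel D) x (rootin T y (tmax (skel D)))"
      using hl_IS[OF GinG[OF D(1)] D(2) y] assms by blast+
    have m: "rootin T y (tmax (skel D)) \<in> tmax (skel D)" "tle T (rootin T y (tmax (skel D))) y"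
      using rootin[OF GinG[OF D(1)] d(1)] by blast+
    have "leaf F y \<subseteq> leaf F (rootin T y (tmax (skel D)))" by (rule F_ni[OF m(2)])
    also have "\<dots> = leaf D (rootin T y (tmax (skel D)))" by (rule Gmax[OF D(1) m(1), symmetric])
    also have "\<dots> \<subseteq> leaf D x" by (rule G_ni[OF D(1) less_imp_tle[OF Gtree[OF D(1)] d(2)]])
    finally show ?thesis using leafH_S[OF y] leafH_I[OF D] by blast
  next
    fix D E assume D: "D \<in> \<phi>" "x \<in> impl (skel D)" and E: "E \<in> \<phi>" "y \<in> impl (skel E)"
    show ?thesis
    proof (cases "skel D = skel E")
      case True
      then have "D = E" by (rule inj[OF D(1) E(1)])
      then have "tless (skel D) x y" using hl_II[OF GinG[OF D(1)] D(2)] E assms by blast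
      then have "leaf D y \<subseteq> leaf D x" by (rule G_ni[OF D(1) less_imp_tle[OF Gtree[OF D(1)]]])
      moreover have "leaf H y = leaf D y - L" using leafH_I[OF E(1,2)] \<open>D = E\<close> by simp
      moreover have "leaf H x = leaf D x - L" using leafH_I[OF D(1,2)] by simp
      ultimately show ?thesis by blast
    next
      case False
      have d: "troot (skel E) \<in> dcl T (tmax (skel D))" "tless (skel D) x (rootin T (troot (skel E)) (tmax (skel D)))"
        using hl_II2[OF GinG[OF D(1)] GinG[OF E(1)] False D(2) E(2)] assms by blast+
      have m: "rootin T (troot (skel E)) (tmax (skel D)) \<in> tmax (skel D)" "tle T (rootin T (troot (skel E)) (tmax (skel D))) (troot (skel E))"
        using rootin[OF GinG[OF D(1)] d(1)] by blast+
      have "leaf E y \<subseteq> leaf F (troot (skel E))" by (rule G_sub0[OF E(1) impl_nodesG[OF E(2)]])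
      also have "\<dots> \<subseteq> leaf F (rootin T (troot (skel E)) (tmax (skel D)))" by (rule F_ni[OF m(2)])
      also have "\<dots> = leaf D (rootin T (troot (skel E)) (tmax (skel D)))" by (rule Gmax[OF D(1) m(1), symmetric])
      also have "\<dots> \<subseteq> leaf D x" by (rule G_ni[OF D(1) less_imp_tle[OF Gtree[OF D(1)] d(2)]])
      finally show ?thesis using leafH_I[OF D] leafH_I[OF E] by blast
    qed
  qed
qed

lemma part_a: "nonincreasing H"
  unfolding nonincreasing_def skelH tle_def using ni_less by blast

lemma part_e: assumes "open_in X F" "\<forall>G \<in> \<phi>. open_in X G"
  shows "open_in (subtopology X (topspace X - L)) H"
  unfolding open_in_def skelH
proof
  fix x assume x: "x \<in> tnodes HT"
  have key: "openin (subtopology X (topspace X - L)) (A - L)" if "openin X A" for A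
  proof -
    have "A - L = A \<inter> (topspace X - L)" using openin_subset[OF that] by blast
    then show ?thesis unfolding openin_subtopology using that by (intro exI[of _ A]) simp
  qed
  show "openin (subtopology X (topspace X - L)) (leaf H x)"
  proof (rule nodeF_cases[OF x])
    assume xs: "x \<in> sp"
    have "x \<in> tnodes T" by (rule supp_T[OF xs])
    then have "openin X (leaf F x)" using assms(1) unfolding open_in_def by simp
    then show ?thesis using key leafH_S[OF xs] by simp
  next
    fix G assume G: "G \<in> \<phi>" "x \<in> impl (skel G)"
    have "x \<in> tnodes (skel G)" by (rule impl_nodesG[OF G(2)])
    moreover have "open_in X G" using assms(2) G(1) by simp
    ultimately have "openin X (leaf G x)" unfolding open_in_def by simp
    then show ?thesis using key leafH_I[OF G] by simp
  qed
qed

lemma split_SI: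
  assumes sF: "splittable F" and E: "E \<in> \<phi>" "y \<in> impl (skel E)" and sE: "splittable E"
    and x: "x \<in> sp" and nxy: "\<not> hl x y" and nyx: "\<not> hl y x"
  shows "leaf F x \<inter> leaf E y = {}"
proof -
  let ?g = "skel E" and ?e = "troot (skel E)"
  have gG: "?g \<in> \<Gamma>" using E by blast
  have nxe: "\<not> tle T x ?e" using hl_SI[OF gG x E(2)] nxy by blast
  have xT: "x \<in> tnodes T" by (rule supp_T[OF x])
  have eT: "?e \<in> tnodes T" by (rule g0T[OF gG])
  have yE0: "leaf E y \<subseteq> leaf F ?e" by (rule G_sub0[OF E(1) impl_nodesG[OF E(2)]])
  show ?thesis
  proof (cases "tle T ?e x")
    case True
    then have ex: "tless T ?e x" using nxe unfolding tle_def by blast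
    have xd: "x \<in> dcl T (tmax ?g)" by (rule supp_dcl[OF x gG ex])
    have m: "rootin T x (tmax ?g) \<in> tmax ?g" "tle T (rootin T x (tmax ?g)) x"
      using rootin[OF gG xd] by blast+
    have "\<not> tless ?g y (rootin T x (tmax ?g))" using hl_IS[OF gG E(2) x] nyx xd by blast
    then have "incomp ?g y (rootin T x (tmax ?g))" by (rule max_incomp[OF E m(1)])
    then have "leaf E y \<inter> leaf E (rootin T x (tmax ?g)) = {}" using sE unfolding splittable_def by blast
    moreover have "leaf F x \<subseteq> leaf F (rootin T x (tmax ?g))" by (rule F_ni[OF m(2)])
    moreover have "leaf E (rootin T x (tmax ?g)) = leaf F (rootin T x (tmax ?g))" by (rule Gmax[OF E(1) m(1)])
    ultimately show ?thesis by blast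
  next
    case False
    then have "incomp T x ?e" using nxe xT eT unfolding incomp_def by blast
    then have "leaf F x \<inter> leaf F ?e = {}" using sF unfolding splittable_def by blast
    then show ?thesis using yE0 by blast
  qed
qed

lemma split_II_dir:
  assumes D: "D \<in> \<phi>" "x \<in> impl (skel D)" and E: "E \<in> \<phi>" "y \<in> impl (skel E)"
    and ne: "skel D \<noteq> skel E" and sD: "splittable D"
    and d: "troot (skel E) \<in> dcl T (tmax (skel D))" and nxy: "\<not> hl x y"
  shows "leaf D x \<inter> leaf E y = {}"
proof -
  have dG: "skel D \<in> \<Gamma>" "skel E \<in> \<Gamma>" using D E by blast+
  let ?m = "rootin T (troot (skel E)) (tmax (skel D))"
  have m: "?m \<in> tmax (skel D)" "tle T ?m (troot (skel E))" using rootin[OF dG(1) d] by blast+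
  have "\<not> tless (skel D) x ?m" using hl_II2[OF dG ne D(2) E(2)] nxy d by blast
  then have "incomp (skel D) x ?m" by (rule max_incomp[OF D(1) D(2) m(1)])
  then have "leaf D x \<inter> leaf D ?m = {}" using sD unfolding splittable_def by blast
  moreover have "leaf E y \<subseteq> leaf F (troot (skel E))" by (rule G_sub0[OF E(1) impl_nodesG[OF E(2)]])
  moreover have "leaf F (troot (skel E)) \<subseteq> leaf F ?m" by (rule F_ni[OF m(2)])
  moreover have "leaf D ?m = leaf F ?m" by (rule Gmax[OF D(1) m(1)])
  ultimately show ?thesis by blast
qed

lemma split_II:
  assumes sF: "splittable F" and D: "D \<in> \<phi>" "x \<in> impl (skel D)" and E: "E \<in> \<phi>" "y \<in> impl (skel E)"
    and ne: "skel D \<noteq> skel E" and sD: "splittable D" and sE: "splittable E"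
    and nxy: "\<not> hl x y" and nyx: "\<not> hl y x"
  shows "leaf D x \<inter> leaf E y = {}"
proof -
  have dG: "skel D \<in> \<Gamma>" "skel E \<in> \<Gamma>" using D E by blast+
  from cons[OF dG ne] show ?thesis
  proof (elim conjE disjE)
    assume "incomp T (troot (skel D)) (troot (skel E))"
    then have "leaf F (troot (skel D)) \<inter> leaf F (troot (skel E)) = {}" using sF unfolding splittable_def by blast
    moreover have "leaf D x \<subseteq> leaf F (troot (skel D))" by (rule G_sub0[OF D(1) impl_nodesG[OF D(2)]])
    moreover have "leaf E y \<subseteq> leaf F (troot (skel E))" by (rule G_sub0[OF E(1) impl_nodesG[OF E(2)]])
    ultimately show ?thesis by blast
  next
    assume "troot (skel D) \<in> dcl T (tmax (skel E))"
    from split_II_dir[OF E D ne[symmetric] sE this nyx] show ?thesis by blast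
  next
    assume "troot (skel E) \<in> dcl T (tmax (skel D))"
    from split_II_dir[OF D E ne sD this nxy] show ?thesis .
  qed
qed

lemma part_b: assumes sF: "splittable F" and sG: "\<forall>G \<in> \<phi>. splittable G"
  shows "splittable H"
  unfolding splittable_def skelH
proof (intro allI impI)
  fix x y assume inc: "incomp HT x y"
  have n: "x \<in> tnodes HT" "y \<in> tnodes HT" and nxy: "\<not> hl x y" and nyx: "\<not> hl y x"
    using inc unfolding incomp_def tle_def by blast+
  have ne: "x \<noteq> y" using inc n unfolding incomp_def tle_def by blast
  show "leaf H x \<inter> leaf H y = {}"
  proof (rule nodeF_cases[OF n(1)]; rule nodeF_cases[OF n(2)])
    assume x: "x \<in> sp" and y: "y \<in> sp"
    have "incomp T x y" using supp_T[OF x] supp_T[OF y] ne nxy nyx hl_SS[OF x y] hl_SS[OF y x]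
      unfolding incomp_def tle_def by blast
    then have "leaf F x \<inter> leaf F y = {}" using sF unfolding splittable_def by blast
    then show ?thesis using leafH_S[OF x] leafH_S[OF y] by blast
  next
    fix E assume x: "x \<in> sp" and E: "E \<in> \<phi>" "y \<in> impl (skel E)"
    have sE: "splittable E" using sG E(1) by blast
    have "leaf F x \<inter> leaf E y = {}" by (rule split_SI[OF sF E sE x nxy nyx])
    then show ?thesis using leafH_S[OF x] leafH_I[OF E] by blast
  next
    fix E assume y: "y \<in> sp" and E: "E \<in> \<phi>" "x \<in> impl (skel E)"
    have sE: "splittable E" using sG E(1) by blast
    have "leaf F y \<inter> leaf E x = {}" by (rule split_SI[OF sF E sE y nyx nxy])
    then show ?thesis using leafH_S[OF y] leafH_I[OF E] by blast
  next
    fix D E assume D: "D \<in> \<phi>" "x \<in> impl (skel D)" and E: "E \<in> \<phi>" "y \<in> impl (skel E)"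
    show ?thesis
    proof (cases "skel D = skel E")
      case True
      then have DE: "D = E" by (rule inj[OF D(1) E(1)])
      have y': "y \<in> impl (skel D)" using E(2) DE by simp
      have "\<not> tless (skel D) x y" "\<not> tless (skel D) y x"
        using hl_II[OF GinG[OF D(1)] D(2) y'] hl_II[OF GinG[OF D(1)] y' D(2)] nxy nyx by blast+
      moreover have "x \<in> tnodes (skel D)" "y \<in> tnodes (skel D)" using impl_nodesG[OF D(2)] impl_nodesG[OF y'] by blast+
      ultimately have "incomp (skel D) x y" using ne unfolding incomp_def tle_def by blast
      then have "leaf D x \<inter> leaf D y = {}" using sG D(1) unfolding splittable_def by blast
      moreover have "leaf H x = leaf D x - L" by (rule leafH_I[OF D])
      moreover have "leaf H y = leaf D y - L" using leafH_I[OF E] DE by simp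
      ultimately show ?thesis by blast
    next
      case False
      have sD: "splittable D" "splittable E" using sG D(1) E(1) by blast+
      have "leaf D x \<inter> leaf E y = {}" by (rule split_II[OF sF D E False sD nxy nyx])
      then show ?thesis using leafH_I[OF D] leafH_I[OF E] by blast
    qed
  qed
qed

lemma leafH_son_g: assumes G: "G \<in> \<phi>" and x: "x \<in> tnodes (skel G)" and s: "s \<in> sons (skel G) x"
  shows "leaf H s = leaf G s - L"
proof -
  from son_g_cases[OF GinG[OF G] x s] show ?thesis
  proof
    assume "s \<in> impl (skel G)" then show ?thesis by (rule leafH_I[OF G])
  next
    assume sm: "s \<in> tmax (skel G)"
    have "leaf H s = leaf F s - L" by (rule leafH_S[OF max_supp[OF GinG[OF G] sm]])
    then show ?thesis using Gmax[OF G sm] by simp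
  qed
qed

lemma strict_from_G:
  assumes G: "G \<in> \<phi>" and sG: "locally_strict G" and x: "x \<in> tnodes (skel G)" "x \<notin> tmax (skel G)"
    and so: "sons HT x = sons (skel G) x" and lx: "leaf H x = leaf G x - L"
  shows "leaf H x = (\<Union>s \<in> sons HT x. leaf H s) \<and>
        (\<forall>s \<in> sons HT x. \<forall>t \<in> sons HT x. s \<noteq> t \<longrightarrow> leaf H s \<inter> leaf H t = {})"
proof -
  have ls: "leaf G x = (\<Union>s \<in> sons (skel G) x. leaf G s)"
    and dj: "\<forall>s \<in> sons (skel G) x. \<forall>t \<in> sons (skel G) x. s \<noteq> t \<longrightarrow> leaf G s \<inter> leaf G t = {}"
    using sG x unfolding locally_strict_def by blast+
  have eq: "\<And>s. s \<in> sons (skel G) x \<Longrightarrow> leaf H s = leaf G s - L" using leafH_son_g[OF G x(1)] by blast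
  have "(\<Union>s \<in> sons HT x. leaf H s) = (\<Union>s \<in> sons (skel G) x. leaf G s - L)"
    using so eq by simp
  also have "\<dots> = leaf G x - L" using ls by blast
  finally have 1: "leaf H x = (\<Union>s \<in> sons HT x. leaf H s)" using lx by simp
  have 2: "\<forall>s \<in> sons HT x. \<forall>t \<in> sons HT x. s \<noteq> t \<longrightarrow> leaf H s \<inter> leaf H t = {}"
  proof (intro ballI impI)
    fix s t assume "s \<in> sons HT x" "t \<in> sons HT x" "s \<noteq> t"
    then have "s \<in> sons (skel G) x" "t \<in> sons (skel G) x" "s \<noteq> t" using so by simp_all
    then show "leaf H s \<inter> leaf H t = {}" using dj eq by blast
  qed
  show ?thesis using 1 2 by blast
qed

lemma part_c: assumes sF: "locally_strict F" and sG: "\<forall>G \<in> \<phi>. locally_strict G"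
  shows "locally_strict H"
  unfolding locally_strict_def skelH
proof (rule ballI)
  fix x assume xx: "x \<in> tnodes HT - tmax HT"
  have xn: "x \<in> tnodes HT" and xnm: "x \<notin> tmax HT" using xx by blast+
  show "leaf H x = (\<Union>s \<in> sons HT x. leaf H s) \<and>
        (\<forall>s \<in> sons HT x. \<forall>t \<in> sons HT x. s \<noteq> t \<longrightarrow> leaf H s \<inter> leaf H t = {})"
  proof (rule nodeF_cases[OF xn])
    fix G assume G: "G \<in> \<phi>" and xi: "x \<in> impl (skel G)"
    have sGG: "locally_strict G" using sG G by blast
    have xg: "x \<in> tnodes (skel G)" "x \<notin> tmax (skel G)" using impl_sub[OF xi] by blast+
    show ?thesis by (rule strict_from_G[OF G sGG xg sons_I[OF GinG[OF G] xi] leafH_I[OF G xi]])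
  next
    assume xs: "x \<in> sp"
    show ?thesis
    proof (cases "\<exists>g\<in>\<Gamma>. x = troot g")
      case True
      then obtain G where G: "G \<in> \<phi>" and xr: "x = troot (skel G)" by blast
      have sGG: "locally_strict G" using sG G by blast
      have xg: "x \<in> tnodes (skel G)" "x \<notin> tmax (skel G)"
        using g0[OF GinG[OF G]] root_not_max[OF GinG[OF G]] xr by blast+
      have so: "sons HT x = sons (skel G) x" using sons_root[OF GinG[OF G]] xr by simp
      have lx: "leaf H x = leaf G x - L" using leafH_S[OF xs] cut_L[OF G] xr by simp
      show ?thesis by (rule strict_from_G[OF G sGG xg so lx])
    next
      case False
      then have nr: "\<forall>g\<in>\<Gamma>. x \<noteq> troot g" by blast
      have so: "sons HT x = sons T x" by (rule sons_S[OF xs nr])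
      have xT: "x \<in> tnodes T - tmax T" using supp_T[OF xs] nonmax_S[OF xs nr xnm] by blast
      have ls: "leaf F x = (\<Union>s \<in> sons T x. leaf F s)"
        and dj: "\<forall>s \<in> sons T x. \<forall>t \<in> sons T x. s \<noteq> t \<longrightarrow> leaf F s \<inter> leaf F t = {}"
        using sF xT unfolding locally_strict_def by blast+
      have eq: "\<And>s. s \<in> sons T x \<Longrightarrow> leaf H s = leaf F s - L"
        using leafH_S sonT_supp[OF xs nr] by blast
      have "(\<Union>s \<in> sons HT x. leaf H s) = (\<Union>s \<in> sons T x. leaf F s - L)"
        using so eq by simp
      also have "\<dots> = leaf F x - L" using ls by blast
      finally have 1: "leaf H x = (\<Union>s \<in> sons HT x. leaf H s)" using leafH_S[OF xs] by simp
      have 2: "\<forall>s \<in> sons HT x. \<forall>t \<in> sons HT x. s \<noteq> t \<longrightarrow> leaf H s \<inter> leaf H t = {}"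
      proof (intro ballI impI)
        fix s t assume "s \<in> sons HT x" "t \<in> sons HT x" "s \<noteq> t"
        then have "s \<in> sons T x" "t \<in> sons T x" "s \<noteq> t" using so by simp_all
        then show "leaf H s \<inter> leaf H t = {}" using dj eq by blast
      qed
      show ?thesis using 1 2 by blast
    qed
  qed
qed

lemma fruit_sub: assumes B: "is_branch HT B" shows "fruit H B \<subseteq> fruit F (proj B)"
proof
  fix q assume q: "q \<in> fruit H B"
  show "q \<in> fruit F (proj B)"
    unfolding fruit_def
  proof
    fix t assume "t \<in> proj B"
    then obtain b where b: "b \<in> B" "b \<in> sp" "tle T t b" unfolding proj_def by blast
    have "q \<in> leaf H b" using q b(1) unfolding fruit_def by blast
    then have "q \<in> leaf F b" using leafH_S[OF b(2)] by blast
    then show "q \<in> leaf F t" using F_ni[OF b(3)] by blast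
  qed
qed

lemma fruit_sup: assumes sF: "splittable F" and bc: "\<forall>G\<in>\<phi>. bounded_chains (skel G)"
  and B: "is_branch HT B" and p: "p \<in> fruit F (proj B)" shows "p \<in> fruit H B"
proof -
  have bc': "\<forall>g\<in>\<Gamma>. bounded_chains g" using bc by blast
  have PB: "is_branch T (proj B)" by (rule K2[OF bc' B])
  have pt: "\<And>t. t \<in> proj B \<Longrightarrow> p \<in> leaf F t" using p unfolding fruit_def by blast
  have pL: "p \<notin> L"
  proof
    assume "p \<in> L"
    then obtain E where E: "E \<in> \<phi>" and pc: "p \<in> cut F E" unfolding loss_def by blast
    let ?e = "troot (skel E)"
    have eG: "skel E \<in> \<Gamma>" using E by blast
    have eT: "?e \<in> tnodes T" by (rule g0T[OF eG])
    have pe: "p \<in> leaf F ?e" "p \<notin> leaf E ?e" using pc unfolding cut_def by blast+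
    have "is_chain T (insert ?e (proj B))"
      unfolding is_chain_def
    proof (intro conjI ballI)
      show "insert ?e (proj B) \<subseteq> tnodes T" using eT PB unfolding is_branch_def is_chain_def by blast
      fix a b assume a: "a \<in> insert ?e (proj B)" and b: "b \<in> insert ?e (proj B)"
      have pa: "p \<in> leaf F a" using a pt pe by blast
      have pb: "p \<in> leaf F b" using b pt pe by blast
      have an: "a \<in> tnodes T" "b \<in> tnodes T" using a b eT PB unfolding is_branch_def is_chain_def by blast+
      have "\<not> incomp T a b" using pa pb sF unfolding splittable_def by blast
      then show "tle T a b \<or> tle T b a" using an unfolding incomp_def by blast
    qed
    then have "insert ?e (proj B) = proj B" using PB unfolding is_branch_def by blast
    then have "?e \<in> proj B" by blast
    then obtain b where b: "b \<in> B" "b \<in> sp" "tle T ?e b" unfolding proj_def by blast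
    have "\<exists>m. m \<in> proj B \<and> m \<in> tmax (skel E)"
    proof (cases "?e = b")
      case True
      then have "?e \<in> B" using b by simp
      then obtain m where m: "m \<in> B" "m \<in> tmax (skel E)" using K1[OF bc' B eG] by blast
      then show ?thesis using proj_sp[OF m(1) max_supp[OF eG m(2)]] by blast
    next
      case False
      then have Eb: "tless T ?e b" using b(3) unfolding tle_def by blast
      have bd: "b \<in> dcl T (tmax (skel E))" by (rule supp_dcl[OF b(2) eG Eb])
      have rr: "rootin T b (tmax (skel E)) \<in> tmax (skel E)" "tle T (rootin T b (tmax (skel E))) b"
        using rootin[OF eG bd] by blast+
      have "rootin T b (tmax (skel E)) \<in> proj B"
        unfolding proj_def using rr(2) b tle_nodes[OF T rr(2)] by blast
      then show ?thesis using rr(1) by blast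
    qed
    then obtain m where m: "m \<in> proj B" "m \<in> tmax (skel E)" by blast
    have "p \<in> leaf E m" using pt[OF m(1)] Gmax[OF E m(2)] by simp
    moreover have "leaf E m \<subseteq> leaf E ?e" using G_ni[OF E] root_less_max[OF eG m(2)] less_imp_tle[OF Gtree[OF E]] by blast
    ultimately show False using pe by blast
  qed
  show ?thesis
    unfolding fruit_def
  proof
    fix x assume x: "x \<in> B"
    have xn: "x \<in> tnodes HT" by (rule br_nodes[OF B x])
    show "p \<in> leaf H x"
    proof (rule nodeF_cases[OF xn])
      assume xs: "x \<in> sp"
      then show ?thesis using leafH_S[OF xs] pt[OF proj_sp[OF x xs]] pL by blast
    next
      fix G assume G: "G \<in> \<phi>" and xi: "x \<in> impl (skel G)"
      obtain m where m: "m \<in> B" "m \<in> tmax (skel G)" "tless (skel G) x m"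
        using K3[OF bc' B GinG[OF G] x xi] by blast
      have "p \<in> leaf F m" using pt proj_sp[OF m(1) max_supp[OF GinG[OF G] m(2)]] by blast
      then have "p \<in> leaf G m" using Gmax[OF G m(2)] by simp
      moreover have "leaf G m \<subseteq> leaf G x" using G_ni[OF G less_imp_tle[OF Gtree[OF G] m(3)]] .
      ultimately show ?thesis using leafH_I[OF G xi] pL by blast
    qed
  qed
qed

lemma H_nonempty: assumes "tnodes T \<noteq> {}" shows "tnodes HT \<noteq> {}"
proof -
  obtain t where t: "t \<in> tnodes T" using assms by blast
  show ?thesis
  proof (cases "t \<in> sp")
    case True then show ?thesis using H_nodes by blast
  next
    case False
    then obtain E where "E \<in> \<Gamma>" using t unfolding supp_iff by blast
    then show ?thesis using root_supp H_nodes by blast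
  qed
qed

lemma part_d1: assumes "complete F" "splittable F" "\<forall>G\<in>\<phi>. bounded_chains (skel G)"
  shows "complete H"
  unfolding complete_def skelH
proof (intro conjI allI impI)
  show "tnodes HT \<noteq> {}" using H_nonempty assms(1) unfolding complete_def by blast
  fix B assume B: "is_branch HT B"
  have bc': "\<forall>g\<in>\<Gamma>. bounded_chains g" using assms(3) by blast
  have "fruit F (proj B) \<noteq> {}" using assms(1) K2[OF bc' B] unfolding complete_def by blast
  then obtain p where "p \<in> fruit F (proj B)" by blast
  then show "fruit H B \<noteq> {}" using fruit_sup[OF assms(2,3) B] by blast
qed

lemma part_d2: assumes "strict_branches F" "splittable F" "\<forall>G\<in>\<phi>. bounded_chains (skel G)"
  shows "strict_branches H"
  unfolding strict_branches_def skelH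
proof (intro conjI allI impI)
  show "tnodes HT \<noteq> {}" using H_nonempty assms(1) unfolding strict_branches_def by blast
  fix B assume B: "is_branch HT B"
  have bc': "\<forall>g\<in>\<Gamma>. bounded_chains g" using assms(3) by blast
  obtain p where p: "fruit F (proj B) = {p}" using assms(1) K2[OF bc' B] unfolding strict_branches_def by blast
  have "p \<in> fruit H B" using fruit_sup[OF assms(2,3) B] p by blast
  moreover have "fruit H B \<subseteq> {p}" using fruit_sub[OF B] p by blast
  ultimately show "\<exists>p. fruit H B = {p}" by blast
qed

end

theorem mainTheorem10:
  fixes F :: "('n, 'a) ftree" and \<phi> :: "('n, 'a) ftree set"
  assumes "foliage_tree F" and "nonincreasing F" and "consistent_fgrafts F \<phi>"
  shows "nonincreasing (fhybr F \<phi>) \<and>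
    (splittable F \<and> (\<forall>G \<in> \<phi>. splittable G) \<longrightarrow> splittable (fhybr F \<phi>)) \<and>
    (locally_strict F \<and> (\<forall>G \<in> \<phi>. locally_strict G) \<longrightarrow> locally_strict (fhybr F \<phi>)) \<and>
    (complete F \<and> splittable F \<and> (\<forall>G \<in> \<phi>. bounded_chains (skel G))
       \<longrightarrow> complete (fhybr F \<phi>)) \<and>
    (strict_branches F \<and> splittable F \<and> (\<forall>G \<in> \<phi>. bounded_chains (skel G))
       \<longrightarrow> strict_branches (fhybr F \<phi>)) \<and>
    (\<forall>X :: 'a topology. open_in X F \<and> (\<forall>G \<in> \<phi>. open_in X G)
       \<longrightarrow> open_in (subtopology X (topspace X - loss F \<phi>)) (fhybr F \<phi>))"
proof -
  interpret FH F \<phi> by unfold_locales (rule assms)+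
  have a: "nonincreasing (fhybr F \<phi>)" by (rule part_a)
  have b: "splittable F \<and> (\<forall>G \<in> \<phi>. splittable G) \<longrightarrow> splittable (fhybr F \<phi>)" using part_b by blast
  have c: "locally_strict F \<and> (\<forall>G \<in> \<phi>. locally_strict G) \<longrightarrow> locally_strict (fhybr F \<phi>)" using part_c by blast
  have d1: "complete F \<and> splittable F \<and> (\<forall>G \<in> \<phi>. bounded_chains (skel G)) \<longrightarrow> complete (fhybr F \<phi>)"
    using part_d1 by blast
  have d2: "strict_branches F \<and> splittable F \<and> (\<forall>G \<in> \<phi>. bounded_chains (skel G)) \<longrightarrow> strict_branches (fhybr F \<phi>)"
    using part_d2 by blast
  have e: "\<forall>X :: 'a topology. open_in X F \<and> (\<forall>G \<in> \<phi>. open_in X G)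
       \<longrightarrow> open_in (subtopology X (topspace X - loss F \<phi>)) (fhybr F \<phi>)"
    using part_e by blast
  show ?thesis using a b c d1 d2 e by blast
qed

end
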